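(* Let $(H,R)$ be a semiquasitriangular Hopf algebra with Drinfeld element $u=S(R^{(2)})R^{(1)}$. Then $u$, $S(u)$ and $uS(u)$ are coinvariant for $\nu$, i.e. $\nu(u)=u\otimes 1$, $\nu(S(u))=S(u)\otimes 1$ and $\nu(uS(u))=uS(u)\otimes 1$.
   Context: All vector spaces are over a field $k$, $\otimes=\otimes_k$. For a Hopf algebra $H$ with comultiplication $\Delta$, counit $\epsilon$, antipode $S$, we use Sweedler notation $\Delta(h)=h_1\otimes h_2$, etc. $\operatorname{Z}(H)$ is the centre of $H$. For $R\in H\otimes H$ we write $R=R^{(1)}\otimes R^{(2)}$ (summation understood); $R'^{(1)}\otimes R'^{(2)}$ denotes another copy of $R$. Definition (semiquasitriangular Hopf algebra): a pair $(H,R)$ with $H$ a Hopf algebra with bijective antipode and $R\in H\otimes H$ invertible such that (1) $R^{(1)}_1\otimes R^{(1)}_2\otimes R^{(2)} = R^{(1)}\otimes R'^{(1)}\otimes R^{(2)}R'^{(2)}$; (2) $R^{(1)}\otimes R^{(2)}_1\otimes R^{(2)}_2 = R^{(1)}R'^{(1)}\otimes R'^{(2)}\otimes R^{(2)}$; (3) $R^{(1)}\otimes R^{(2)}_2R'^{(1)}\otimes R^{(2)}_1R'^{(2)} = R^{(1)}\otimes R'^{(1)}R^{(2)}_1\otimes R'^{(2)}R^{(2)}_2$; (4) $R^{(1)}_2R'^{(1)}\otimes R^{(1)}_1R'^{(2)}\otimes R^{(2)} = R'^{(1)}R^{(1)}_1\otimes R'^{(2)}R^{(1)}_2\otimes R^{(2)}$;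 (5) $\nu(h):=R^{(2)}h_2R'^{(2)}\otimes S(h_1)S(R^{(1)})h_3R'^{(1)}\in H\otimes\operatorname{Z}(H)$ for all $h\in H$; (6) $\nu(h)=R^{(1)}h_2R'^{(1)}\otimes S(R'^{(2)})S(h_1)R^{(2)}h_3$ for all $h\in H$. The map $\nu$ in the claim is the one defined in (5). *)

theory Defs
  imports Main
begin

text \<open>
  An element of a tensor power of H is represented by a formal finite sum of
  simple tensors (a list of pairs / triples); two such formal sums denote the
  same element of the tensor product over k iff all functionals of the form
  f1 (x) ... (x) fn (fi k-linear forms on H) agree on them (over a field the
  canonical map into the dual of the tensor power of the dual is injective).
\<close>

definition lin_form :: "('k::field \<Rightarrow> 'h::ring_1 \<Rightarrow> 'h) \<Rightarrow> ('h \<Rightarrow> 'k) \<Rightarrow> bool" where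
  "lin_form scale f \<longleftrightarrow>
     (\<forall>a b. f (a + b) = f a + f b) \<and> (\<forall>c a. f (scale c a) = c * f a)"

definition teq2 :: "('k::field \<Rightarrow> 'h::ring_1 \<Rightarrow> 'h) \<Rightarrow> ('h \<times> 'h) list \<Rightarrow> ('h \<times> 'h) list \<Rightarrow> bool" where
  "teq2 scale xs ys \<longleftrightarrow>
     (\<forall>f g. lin_form scale f \<longrightarrow> lin_form scale g \<longrightarrow>
        (\<Sum>(a, b)\<leftarrow>xs. f a * g b) = (\<Sum>(a, b)\<leftarrow>ys. f a * g b))"

definition teq3 :: "('k::field \<Rightarrow> 'h::ring_1 \<Rightarrow> 'h) \<Rightarrow> ('h \<times> 'h \<times> 'h) list \<Rightarrow> ('h \<times> 'h \<times> 'h) list \<Rightarrow> bool" where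
  "teq3 scale xs ys \<longleftrightarrow>
     (\<forall>f g h. lin_form scale f \<longrightarrow> lin_form scale g \<longrightarrow> lin_form scale h \<longrightarrow>
        (\<Sum>(a, b, c)\<leftarrow>xs. f a * g b * h c) = (\<Sum>(a, b, c)\<leftarrow>ys. f a * g b * h c))"

definition tmul2 :: "('h::ring_1 \<times> 'h) list \<Rightarrow> ('h \<times> 'h) list \<Rightarrow> ('h \<times> 'h) list" where
  "tmul2 xs ys = [(a * c, b * d). (a, b) \<leftarrow> xs, (c, d) \<leftarrow> ys]"

definition centre :: "'h::ring_1 set" where
  "centre = {z. \<forall>x. z * x = x * z}"

definition Delta3 :: "('h \<Rightarrow> ('h \<times> 'h) list) \<Rightarrow> 'h \<Rightarrow> ('h \<times> 'h \<times> 'h) list" where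
  "Delta3 \<Delta> h = [(x, y1, y2). (x, y) \<leftarrow> \<Delta> h, (y1, y2) \<leftarrow> \<Delta> y]"

definition hopf_algebra ::
  "('k::field \<Rightarrow> 'h::ring_1 \<Rightarrow> 'h) \<Rightarrow> ('h \<Rightarrow> ('h \<times> 'h) list) \<Rightarrow> ('h \<Rightarrow> 'k) \<Rightarrow> ('h \<Rightarrow> 'h) \<Rightarrow> bool" where
  "hopf_algebra scale \<Delta> \<epsilon> S \<longleftrightarrow>
     \<comment> \<open>H is a unital associative k-algebra\<close>
     (\<forall>c a b. scale c (a + b) = scale c a + scale c b) \<and>
     (\<forall>c d a. scale (c + d) a = scale c a + scale d a) \<and>
     (\<forall>c d a. scale (c * d) a = scale c (scale d a)) \<and>
     (\<forall>a. scale 1 a = a) \<and>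
     (\<forall>c a b. scale c (a * b) = scale c a * b) \<and>
     (\<forall>c a b. scale c (a * b) = a * scale c b) \<and>
     \<comment> \<open>Delta is a linear, coassociative algebra map\<close>
     (\<forall>a b. teq2 scale (\<Delta> (a + b)) (\<Delta> a @ \<Delta> b)) \<and>
     (\<forall>c a. teq2 scale (\<Delta> (scale c a)) [(scale c x, y). (x, y) \<leftarrow> \<Delta> a]) \<and>
     (\<forall>h. teq3 scale [(x1, x2, y). (x, y) \<leftarrow> \<Delta> h, (x1, x2) \<leftarrow> \<Delta> x] (Delta3 \<Delta> h)) \<and>
     (\<forall>a b. teq2 scale (\<Delta> (a * b)) (tmul2 (\<Delta> a) (\<Delta> b))) \<and>
     teq2 scale (\<Delta> 1) [(1, 1)] \<and>
     \<comment> \<open>epsilon is a linear algebra map and a counit\<close>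
     (\<forall>a b. \<epsilon> (a + b) = \<epsilon> a + \<epsilon> b) \<and>
     (\<forall>c a. \<epsilon> (scale c a) = c * \<epsilon> a) \<and>
     (\<forall>a b. \<epsilon> (a * b) = \<epsilon> a * \<epsilon> b) \<and>
     \<epsilon> 1 = 1 \<and>
     (\<forall>h. (\<Sum>(x, y)\<leftarrow>\<Delta> h. scale (\<epsilon> x) y) = h) \<and>
     (\<forall>h. (\<Sum>(x, y)\<leftarrow>\<Delta> h. scale (\<epsilon> y) x) = h) \<and>
     \<comment> \<open>S is a linear bijective antipode\<close>
     (\<forall>a b. S (a + b) = S a + S b) \<and>
     (\<forall>c a. S (scale c a) = scale c (S a)) \<and>
     (\<forall>h. (\<Sum>(x, y)\<leftarrow>\<Delta> h. S x * y) = scale (\<epsilon> h) 1) \<and>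
     (\<forall>h. (\<Sum>(x, y)\<leftarrow>\<Delta> h. x * S y) = scale (\<epsilon> h) 1) \<and>
     bij S"

definition nu :: "('h::ring_1 \<Rightarrow> ('h \<times> 'h) list) \<Rightarrow> ('h \<Rightarrow> 'h) \<Rightarrow> ('h \<times> 'h) list \<Rightarrow> 'h \<Rightarrow> ('h \<times> 'h) list" where
  "nu \<Delta> S R h =
     [(r2 * h2 * s2, S h1 * S r1 * h3 * s1). (r1, r2) \<leftarrow> R, (s1, s2) \<leftarrow> R, (h1, h2, h3) \<leftarrow> Delta3 \<Delta> h]"

definition semiquasitriangular ::
  "('k::field \<Rightarrow> 'h::ring_1 \<Rightarrow> 'h) \<Rightarrow> ('h \<Rightarrow> ('h \<times> 'h) list) \<Rightarrow> ('h \<Rightarrow> 'k) \<Rightarrow> ('h \<Rightarrow> 'h)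
     \<Rightarrow> ('h \<times> 'h) list \<Rightarrow> bool" where
  "semiquasitriangular scale \<Delta> \<epsilon> S R \<longleftrightarrow>
     hopf_algebra scale \<Delta> \<epsilon> S \<and>
     \<comment> \<open>R is invertible in H (x) H\<close>
     (\<exists>Q. teq2 scale (tmul2 R Q) [(1, 1)] \<and> teq2 scale (tmul2 Q R) [(1, 1)]) \<and>
     \<comment> \<open>(1)\<close>
     teq3 scale [(x1, x2, r2). (r1, r2) \<leftarrow> R, (x1, x2) \<leftarrow> \<Delta> r1]
                [(r1, s1, r2 * s2). (r1, r2) \<leftarrow> R, (s1, s2) \<leftarrow> R] \<and>
     \<comment> \<open>(2)\<close>
     teq3 scale [(r1, y1, y2). (r1, r2) \<leftarrow> R, (y1, y2) \<leftarrow> \<Delta> r2]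
                [(r1 * s1, s2, r2). (r1, r2) \<leftarrow> R, (s1, s2) \<leftarrow> R] \<and>
     \<comment> \<open>(3)\<close>
     teq3 scale [(r1, y2 * s1, y1 * s2). (r1, r2) \<leftarrow> R, (y1, y2) \<leftarrow> \<Delta> r2, (s1, s2) \<leftarrow> R]
                [(r1, s1 * y1, s2 * y2). (r1, r2) \<leftarrow> R, (y1, y2) \<leftarrow> \<Delta> r2, (s1, s2) \<leftarrow> R] \<and>
     \<comment> \<open>(4)\<close>
     teq3 scale [(x2 * s1, x1 * s2, r2). (r1, r2) \<leftarrow> R, (x1, x2) \<leftarrow> \<Delta> r1, (s1, s2) \<leftarrow> R]
                [(s1 * x1, s2 * x2, r2). (r1, r2) \<leftarrow> R, (x1, x2) \<leftarrow> \<Delta> r1, (s1, s2) \<leftarrow> R] \<and>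
     \<comment> \<open>(5): nu(h) lies in H (x) Z(H)\<close>
     (\<forall>h. \<exists>ys. (\<forall>(a, z) \<in> set ys. z \<in> centre) \<and> teq2 scale (nu \<Delta> S R h) ys) \<and>
     \<comment> \<open>(6)\<close>
     (\<forall>h. teq2 scale (nu \<Delta> S R h)
        [(r1 * h2 * s1, S s2 * S h1 * r2 * h3). (r1, r2) \<leftarrow> R, (s1, s2) \<leftarrow> R, (h1, h2, h3) \<leftarrow> Delta3 \<Delta> h])"

definition drinfeld :: "('h::ring_1 \<Rightarrow> 'h) \<Rightarrow> ('h \<times> 'h) list \<Rightarrow> 'h" where
  "drinfeld S R = (\<Sum>(r1, r2)\<leftarrow>R. S r2 * r1)"

end

theory Submission
  imports Defs "HOL.Vector_Spaces"
begin


lemma sum_list_swap: "(\<Sum>x\<leftarrow>xs. \<Sum>y\<leftarrow>ys. (F x y :: 'c::comm_monoid_add)) = (\<Sum>y\<leftarrow>ys. \<Sum>x\<leftarrow>xs. F x y)"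
  by (induction xs) (simp_all add: sum_list_addf)

lemma sum_list_sum_swap: "(\<Sum>x\<leftarrow>xs. \<Sum>e\<in>E. F x e) = (\<Sum>e\<in>E. \<Sum>x\<leftarrow>xs. F x e)"
  by (induction xs) (simp_all add: sum.distrib)

lemma sum_list_concat_map: "sum_list (map f (concat xss)) = (\<Sum>xs\<leftarrow>xss. sum_list (map f xs))"
  by (induction xss) auto

locale HA =
  fixes scale :: "'k::field \<Rightarrow> 'h::ring_1 \<Rightarrow> 'h"
    and \<Delta> :: "'h \<Rightarrow> ('h \<times> 'h) list" and \<epsilon> :: "'h \<Rightarrow> 'k" and S :: "'h \<Rightarrow> 'h"
  assumes hopf: "hopf_algebra scale \<Delta> \<epsilon> S"
begin

abbreviation LF where "LF f \<equiv> lin_form scale f"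

lemma sc_add: "scale c (a + b) = scale c a + scale c b"
  and sc_add2: "scale (c + d) a = scale c a + scale d a"
  and sc_mult: "scale (c * d) a = scale c (scale d a)"
  and sc_one: "scale 1 a = a"
  and sc_ml: "scale c (a * b) = scale c a * b"
  and sc_mr: "scale c (a * b) = a * scale c b"
  using hopf unfolding hopf_algebra_def by auto

sublocale V: vector_space scale
  by unfold_locales (simp_all add: sc_add sc_add2 sc_mult sc_one)

definition Bs where "Bs = V.extend_basis {}"
definition c where "c e x = V.representation Bs x e"
definition supp where "supp x = {e. c e x \<noteq> 0}"

lemma Bs_indep: "V.independent Bs" and Bs_span: "V.span Bs = UNIV"
  unfolding Bs_def using V.independent_extend_basis[OF V.independent_empty] V.span_extend_basis[OF V.independent_empty] by auto

lemma finite_supp: "finite (supp x)"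
  unfolding supp_def c_def by (rule V.finite_representation)

lemma c_lin: "LF (c e)"
  unfolding lin_form_def c_def
  using V.representation_add[OF Bs_indep] V.representation_scale[OF Bs_indep] Bs_span by auto

lemma lf_zero: "LF f \<Longrightarrow> f 0 = 0"
  unfolding lin_form_def by (metis add_cancel_right_right)

lemma lf_add: "LF f \<Longrightarrow> f (a + b) = f a + f b"
  and lf_scale: "LF f \<Longrightarrow> f (scale k a) = k * f a"
  unfolding lin_form_def by auto

lemma lf_sum: "LF f \<Longrightarrow> f (\<Sum>e\<in>E. g e) = (\<Sum>e\<in>E. f (g e))"
  by (induction E rule: infinite_finite_induct) (auto simp: lf_zero lf_add)

lemma lf_sum_list: "LF f \<Longrightarrow> f (\<Sum>x\<leftarrow>xs. g x) = (\<Sum>x\<leftarrow>xs. f (g x))"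
  by (induction xs) (auto simp: lf_zero lf_add)

lemma expand: assumes "finite E" "supp x \<subseteq> E"
  shows "x = (\<Sum>e\<in>E. scale (c e x) e)"
proof -
  have "(\<Sum>e\<in>E. scale (c e x) e) = (\<Sum>e\<in>supp x. scale (c e x) e)"
    using assms by (intro sum.mono_neutral_right) (auto simp: supp_def)
  also have "\<dots> = x"
    unfolding supp_def c_def using V.sum_nonzero_representation_eq[OF Bs_indep] Bs_span by auto
  finally show ?thesis by simp
qed

lemma expand_lf: assumes "LF f" "finite E" "supp x \<subseteq> E"
  shows "f x = (\<Sum>e\<in>E. c e x * f e)"
proof -
  have "f x = f (\<Sum>e\<in>E. scale (c e x) e)" using expand[OF assms(2,3)] by simp
  also have "\<dots> = (\<Sum>e\<in>E. c e x * f e)" using assms(1) by (simp add: lf_sum lf_scale)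
  finally show ?thesis .
qed

lemma separation: assumes "\<And>f. LF f \<Longrightarrow> f x = f y" shows "x = y"
proof -
  let ?E = "supp x \<union> supp y"
  have E: "finite ?E" by (simp add: finite_supp)
  have "x = (\<Sum>e\<in>?E. scale (c e x) e)" by (rule expand[OF E]) auto
  also have "\<dots> = (\<Sum>e\<in>?E. scale (c e y) e)" using assms[OF c_lin] by simp
  also have "\<dots> = y" by (rule expand[OF E, symmetric]) auto
  finally show ?thesis .
qed

definition supps2 :: "('h \<times> 'h) list \<Rightarrow> 'h set" where
  "supps2 xs = (\<Union>p\<in>set xs. supp (fst p) \<union> supp (snd p))"
definition supps3 :: "('h \<times> 'h \<times> 'h) list \<Rightarrow> 'h set" where
  "supps3 xs = (\<Union>p\<in>set xs. supp (fst p) \<union> supp (fst (snd p)) \<union> supp (snd (snd p)))"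

lemma finite_supps2: "finite (supps2 xs)" unfolding supps2_def by (auto simp: finite_supp)
lemma finite_supps3: "finite (supps3 xs)" unfolding supps3_def by (auto simp: finite_supp)

lemma K2:
  assumes eq: "teq2 scale xs ys" and l1: "\<And>a. LF (\<Phi> a)" and l2: "\<And>b. LF (\<lambda>a. \<Phi> a b)"
  shows "(\<Sum>(a,b)\<leftarrow>xs. \<Phi> a b) = (\<Sum>(a,b)\<leftarrow>ys. \<Phi> a b)"
proof -
  let ?E = "supps2 xs \<union> supps2 ys"
  have E: "finite ?E" by (simp add: finite_supps2)
  have ex: "\<Phi> a b = (\<Sum>e\<in>?E. \<Sum>e'\<in>?E. c e a * c e' b * \<Phi> e e')"
    if "supp a \<subseteq> ?E" "supp b \<subseteq> ?E" for a b
  proof -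
    have "\<Phi> a b = (\<Sum>e\<in>?E. c e a * \<Phi> e b)" by (rule expand_lf[OF l2 E that(1)])
    also have "\<dots> = (\<Sum>e\<in>?E. c e a * (\<Sum>e'\<in>?E. c e' b * \<Phi> e e'))"
      using expand_lf[OF l1 E that(2)] by simp
    finally show ?thesis by (simp add: sum_distrib_left mult.assoc)
  qed
  have gen: "(\<Sum>(a,b)\<leftarrow>zs. \<Phi> a b) = (\<Sum>e\<in>?E. \<Sum>e'\<in>?E. (\<Sum>(a,b)\<leftarrow>zs. c e a * c e' b) * \<Phi> e e')"
    if "supps2 zs \<subseteq> ?E" for zs
  proof -
    have "(\<Sum>(a,b)\<leftarrow>zs. \<Phi> a b) = (\<Sum>(a,b)\<leftarrow>zs. \<Sum>e\<in>?E. \<Sum>e'\<in>?E. c e a * c e' b * \<Phi> e e')"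
    proof (rule arg_cong[where f=sum_list], rule map_cong, rule refl, clarify)
      fix a b assume "(a,b) \<in> set zs"
      hence "supp a \<subseteq> ?E" "supp b \<subseteq> ?E" using that unfolding supps2_def by force+
      thus "\<Phi> a b = (\<Sum>e\<in>?E. \<Sum>e'\<in>?E. c e a * c e' b * \<Phi> e e')" by (rule ex)
    qed
    also have "\<dots> = (\<Sum>e\<in>?E. \<Sum>e'\<in>?E. (\<Sum>(a,b)\<leftarrow>zs. c e a * c e' b) * \<Phi> e e')"
      by (simp add: case_prod_unfold sum_list_sum_swap sum_list_mult_const)
    finally show ?thesis .
  qed
  show ?thesis
    using eq c_lin unfolding teq2_def by (simp add: gen)
qed

lemma K3:
  assumes eq: "teq3 scale xs ys" and l1: "\<And>a b. LF (\<Phi> a b)" and l2: "\<And>a c. LF (\<lambda>b. \<Phi> a b c)"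
    and l3: "\<And>b c. LF (\<lambda>a. \<Phi> a b c)"
  shows "(\<Sum>(a,b,c)\<leftarrow>xs. \<Phi> a b c) = (\<Sum>(a,b,c)\<leftarrow>ys. \<Phi> a b c)"
proof -
  let ?E = "supps3 xs \<union> supps3 ys"
  have E: "finite ?E" by (simp add: finite_supps3)
  have ex: "\<Phi> a b d = (\<Sum>e\<in>?E. \<Sum>e'\<in>?E. \<Sum>e''\<in>?E. c e a * c e' b * c e'' d * \<Phi> e e' e'')"
    if "supp a \<subseteq> ?E" "supp b \<subseteq> ?E" "supp d \<subseteq> ?E" for a b d
  proof -
    have "\<Phi> a b d = (\<Sum>e\<in>?E. c e a * \<Phi> e b d)" by (rule expand_lf[OF l3 E that(1)])
    also have "\<dots> = (\<Sum>e\<in>?E. c e a * (\<Sum>e'\<in>?E. c e' b * \<Phi> e e' d))"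
      using expand_lf[OF l2 E that(2)] by simp
    also have "\<dots> = (\<Sum>e\<in>?E. c e a * (\<Sum>e'\<in>?E. c e' b * (\<Sum>e''\<in>?E. c e'' d * \<Phi> e e' e'')))"
      using expand_lf[OF l1 E that(3)] by simp
    finally show ?thesis by (simp add: sum_distrib_left mult.assoc)
  qed
  have gen: "(\<Sum>(a,b,d)\<leftarrow>zs. \<Phi> a b d) = (\<Sum>e\<in>?E. \<Sum>e'\<in>?E. \<Sum>e''\<in>?E. (\<Sum>(a,b,d)\<leftarrow>zs. c e a * c e' b * c e'' d) * \<Phi> e e' e'')"
    if "supps3 zs \<subseteq> ?E" for zs
  proof -
    have "(\<Sum>(a,b,d)\<leftarrow>zs. \<Phi> a b d) = (\<Sum>(a,b,d)\<leftarrow>zs. \<Sum>e\<in>?E. \<Sum>e'\<in>?E. \<Sum>e''\<in>?E. c e a * c e' b * c e'' d * \<Phi> e e' e'')"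
    proof (rule arg_cong[where f=sum_list], rule map_cong, rule refl, clarify)
      fix a b d assume "(a,b,d) \<in> set zs"
      hence "supp a \<subseteq> ?E" "supp b \<subseteq> ?E" "supp d \<subseteq> ?E" using that unfolding supps3_def by force+
      thus "\<Phi> a b d = (\<Sum>e\<in>?E. \<Sum>e'\<in>?E. \<Sum>e''\<in>?E. c e a * c e' b * c e'' d * \<Phi> e e' e'')" by (rule ex)
    qed
    also have "\<dots> = (\<Sum>e\<in>?E. \<Sum>e'\<in>?E. \<Sum>e''\<in>?E. (\<Sum>(a,b,d)\<leftarrow>zs. c e a * c e' b * c e'' d) * \<Phi> e e' e'')"
      by (simp add: case_prod_unfold sum_list_sum_swap sum_list_mult_const)
    finally show ?thesis .
  qed
  show ?thesis
    using eq c_lin unfolding teq3_def by (simp add: gen)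
qed

end


context HA
begin

definition linH :: "('h \<Rightarrow> 'h) \<Rightarrow> bool" where
  "linH \<phi> \<longleftrightarrow> (\<forall>a b. \<phi> (a + b) = \<phi> a + \<phi> b) \<and> (\<forall>k a. \<phi> (scale k a) = scale k (\<phi> a))"

lemma linH_id[intro!]: "linH (\<lambda>x. x)" unfolding linH_def by auto
lemma linH_mr[intro!]: "linH \<phi> \<Longrightarrow> linH (\<lambda>x. \<phi> x * k)"
  unfolding linH_def by (auto simp: distrib_right sc_ml)
lemma linH_ml[intro!]: "linH \<phi> \<Longrightarrow> linH (\<lambda>x. k * \<phi> x)"
  unfolding linH_def by (auto simp: distrib_left sc_mr)

lemma S_add: "S (a + b) = S a + S b" and S_scale: "S (scale k a) = scale k (S a)"
  using hopf unfolding hopf_algebra_def by auto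
lemma e_add: "\<epsilon> (a + b) = \<epsilon> a + \<epsilon> b" and e_scale: "\<epsilon> (scale k a) = k * \<epsilon> a"
  and e_mult: "\<epsilon> (a * b) = \<epsilon> a * \<epsilon> b" and e_one: "\<epsilon> 1 = 1"
  using hopf unfolding hopf_algebra_def by auto
lemma S_bij: "bij S" using hopf unfolding hopf_algebra_def by auto

lemma linH_S[intro!]: "linH \<phi> \<Longrightarrow> linH (\<lambda>x. S (\<phi> x))"
  unfolding linH_def by (auto simp: S_add S_scale)

lemma LF_eps[intro!]: "LF \<epsilon>" unfolding lin_form_def by (auto simp: e_add e_scale)

lemma LF_comp: "LF f \<Longrightarrow> linH \<phi> \<Longrightarrow> LF (\<lambda>x. f (\<phi> x))"
  unfolding lin_form_def linH_def by auto
lemmas LF_eps_comp[intro!] = LF_comp[OF LF_eps]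
lemma LF_mr[intro!]: "LF \<phi> \<Longrightarrow> LF (\<lambda>x. \<phi> x * k)"
  unfolding lin_form_def by (auto simp: distrib_right)
lemma LF_ml[intro!]: "LF \<phi> \<Longrightarrow> LF (\<lambda>x. k * \<phi> x)"
  unfolding lin_form_def by (auto simp: distrib_left)
lemma LF_add[intro!]: "LF \<phi> \<Longrightarrow> LF \<psi> \<Longrightarrow> LF (\<lambda>x. \<phi> x + \<psi> x)"
  unfolding lin_form_def by (auto simp: distrib_left)
lemma LF_sum_list[intro!]: "(\<And>y. LF (F y)) \<Longrightarrow> LF (\<lambda>x. \<Sum>y\<leftarrow>ys. F y x)"
  unfolding lin_form_def by (induction ys) (auto simp: distrib_left)
lemma LF_case_prod[intro!]: "(\<And>a b. LF (F a b)) \<Longrightarrow> LF (\<lambda>x. case p of (a,b) \<Rightarrow> F a b x)"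
  by (cases p) auto

lemma d_add: "teq2 scale (\<Delta> (a + b)) (\<Delta> a @ \<Delta> b)"
  using hopf unfolding hopf_algebra_def by (elim conjE) (simp only:)
lemma d_scale: "teq2 scale (\<Delta> (scale k a)) [(scale k x, y). (x, y) \<leftarrow> \<Delta> a]"
  using hopf unfolding hopf_algebra_def by (elim conjE) (simp only:)
lemma coass: "teq3 scale [(x1, x2, y). (x, y) \<leftarrow> \<Delta> h, (x1, x2) \<leftarrow> \<Delta> x] (Delta3 \<Delta> h)"
  using hopf unfolding hopf_algebra_def by (elim conjE) (simp only:)
lemma d_mult: "teq2 scale (\<Delta> (a * b)) (tmul2 (\<Delta> a) (\<Delta> b))"
  using hopf unfolding hopf_algebra_def by (elim conjE) (simp only:)
lemma d_one: "teq2 scale (\<Delta> 1) [(1, 1)]"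
  using hopf unfolding hopf_algebra_def by (elim conjE) (simp only:)
lemma counitL: "(\<Sum>(x, y)\<leftarrow>\<Delta> h. scale (\<epsilon> x) y) = h"
  using hopf unfolding hopf_algebra_def by (elim conjE) (simp only:)
lemma counitR: "(\<Sum>(x, y)\<leftarrow>\<Delta> h. scale (\<epsilon> y) x) = h"
  using hopf unfolding hopf_algebra_def by (elim conjE) (simp only:)
lemma antiL: "(\<Sum>(x, y)\<leftarrow>\<Delta> h. S x * y) = scale (\<epsilon> h) 1"
  using hopf unfolding hopf_algebra_def by (elim conjE) (simp only:)
lemma antiR: "(\<Sum>(x, y)\<leftarrow>\<Delta> h. x * S y) = scale (\<epsilon> h) 1"
  using hopf unfolding hopf_algebra_def by (elim conjE) (simp only:)

lemma DS_add:
  assumes "\<And>a. LF (\<Psi> a)" "\<And>b. LF (\<lambda>a. \<Psi> a b)"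
  shows "(\<Sum>(x,y)\<leftarrow>\<Delta> (a + b). \<Psi> x y) = (\<Sum>(x,y)\<leftarrow>\<Delta> a. \<Psi> x y) + (\<Sum>(x,y)\<leftarrow>\<Delta> b. \<Psi> x y)"
  using K2[OF d_add assms] by simp

lemma DS_scale:
  assumes "\<And>a. LF (\<Psi> a)" "\<And>b. LF (\<lambda>a. \<Psi> a b)"
  shows "(\<Sum>(x,y)\<leftarrow>\<Delta> (scale k a). \<Psi> x y) = k * (\<Sum>(x,y)\<leftarrow>\<Delta> a. \<Psi> x y)"
proof -
  have "(\<Sum>(x,y)\<leftarrow>\<Delta> (scale k a). \<Psi> x y) = (\<Sum>(x,y)\<leftarrow>[(scale k x, y). (x, y) \<leftarrow> \<Delta> a]. \<Psi> x y)"
    by (rule K2[OF d_scale assms])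
  also have "\<dots> = (\<Sum>(x,y)\<leftarrow>\<Delta> a. k * \<Psi> x y)"
    using assms(2)[unfolded lin_form_def] by (simp add: case_prod_unfold o_def)
  finally show ?thesis by (simp add: sum_list_const_mult case_prod_unfold)
qed

lemma LF_Delta[intro!]:
  assumes "\<And>a. LF (\<Psi> a)" "\<And>b. LF (\<lambda>a. \<Psi> a b)" "linH \<phi>"
  shows "LF (\<lambda>h. \<Sum>(x,y)\<leftarrow>\<Delta> (\<phi> h). \<Psi> x y)"
  using assms(3) unfolding lin_form_def linH_def by (auto simp: DS_add[OF assms(1,2)] DS_scale[OF assms(1,2)])

lemma D3_unfold: "(\<Sum>(a,b,d)\<leftarrow>Delta3 \<Delta> h. \<Psi> a b d) = (\<Sum>(x,y)\<leftarrow>\<Delta> h. \<Sum>(y1,y2)\<leftarrow>\<Delta> y. \<Psi> x y1 y2)"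
  unfolding Delta3_def by (simp add: sum_list_concat_map o_def case_prod_unfold)

lemma LF_Delta3[intro!]:
  assumes "\<And>a b. LF (\<Psi> a b)" "\<And>a d. LF (\<lambda>b. \<Psi> a b d)" "\<And>b d. LF (\<lambda>a. \<Psi> a b d)" "linH \<phi>"
  shows "LF (\<lambda>h. \<Sum>(a,b,d)\<leftarrow>Delta3 \<Delta> (\<phi> h). \<Psi> a b d)"
  unfolding D3_unfold using assms by (intro LF_Delta) auto

lemma coass_S:
  assumes "\<And>a b. LF (\<Psi> a b)" "\<And>a d. LF (\<lambda>b. \<Psi> a b d)" "\<And>b d. LF (\<lambda>a. \<Psi> a b d)"
  shows "(\<Sum>(a,b,d)\<leftarrow>Delta3 \<Delta> h. \<Psi> a b d) = (\<Sum>(x,y)\<leftarrow>\<Delta> h. \<Sum>(x1,x2)\<leftarrow>\<Delta> x. \<Psi> x1 x2 y)"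
  using K3[OF coass assms] by (simp add: sum_list_concat_map o_def case_prod_unfold)

lemma DS_mult:
  assumes "\<And>a. LF (\<Psi> a)" "\<And>b. LF (\<lambda>a. \<Psi> a b)"
  shows "(\<Sum>(x,y)\<leftarrow>\<Delta> (a * b). \<Psi> x y) = (\<Sum>(x1,y1)\<leftarrow>\<Delta> a. \<Sum>(x2,y2)\<leftarrow>\<Delta> b. \<Psi> (x1 * x2) (y1 * y2))"
  using K2[OF d_mult assms] unfolding tmul2_def by (simp add: sum_list_concat_map o_def case_prod_unfold)

lemma DS_one:
  assumes "\<And>a. LF (\<Psi> a)" "\<And>b. LF (\<lambda>a. \<Psi> a b)"
  shows "(\<Sum>(x,y)\<leftarrow>\<Delta> 1. \<Psi> x y) = \<Psi> 1 1"
  using K2[OF d_one assms] by simp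

end


context HA
begin

lemma lf_sum_list2: "LF f \<Longrightarrow> f (\<Sum>(x,y)\<leftarrow>xs. g x y) = (\<Sum>(x,y)\<leftarrow>xs. f (g x y))"
  by (simp add: lf_sum_list case_prod_unfold)

lemma counitL_f: assumes "LF \<Phi>" shows "(\<Sum>(x,y)\<leftarrow>\<Delta> h. \<epsilon> x * \<Phi> y) = \<Phi> h"
proof -
  have "\<Phi> h = \<Phi> (\<Sum>(x, y)\<leftarrow>\<Delta> h. scale (\<epsilon> x) y)" by (simp add: counitL)
  also have "\<dots> = (\<Sum>(x,y)\<leftarrow>\<Delta> h. \<epsilon> x * \<Phi> y)" by (simp add: lf_sum_list2[OF assms] lf_scale[OF assms])
  finally show ?thesis by simp
qed

lemma counitR_f: assumes "LF \<Phi>" shows "(\<Sum>(x,y)\<leftarrow>\<Delta> h. \<epsilon> y * \<Phi> x) = \<Phi> h"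
proof -
  have "\<Phi> h = \<Phi> (\<Sum>(x, y)\<leftarrow>\<Delta> h. scale (\<epsilon> y) x)" by (simp add: counitR)
  also have "\<dots> = (\<Sum>(x,y)\<leftarrow>\<Delta> h. \<epsilon> y * \<Phi> x)" by (simp add: lf_sum_list2[OF assms] lf_scale[OF assms])
  finally show ?thesis by simp
qed

lemma antiL_f: assumes "LF \<Phi>" shows "(\<Sum>(x,y)\<leftarrow>\<Delta> h. \<Phi> (S x * y)) = \<epsilon> h * \<Phi> 1"
  using arg_cong[OF antiL, of \<Phi> h] by (simp add: lf_sum_list2[OF assms] lf_scale[OF assms])

lemma antiR_f: assumes "LF \<Phi>" shows "(\<Sum>(x,y)\<leftarrow>\<Delta> h. \<Phi> (x * S y)) = \<epsilon> h * \<Phi> 1"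
  using arg_cong[OF antiR, of \<Phi> h] by (simp add: lf_sum_list2[OF assms] lf_scale[OF assms])

lemma coass2:
  assumes "\<And>a b. LF (G a b)" "\<And>a d. LF (\<lambda>b. G a b d)" "\<And>b d. LF (\<lambda>a. G a b d)"
  shows "(\<Sum>(x,y)\<leftarrow>\<Delta> h. \<Sum>(y1,y2)\<leftarrow>\<Delta> y. G x y1 y2) = (\<Sum>(x,y)\<leftarrow>\<Delta> h. \<Sum>(x1,x2)\<leftarrow>\<Delta> x. G x1 x2 y)"
  using D3_unfold[of G h] coass_S[OF assms, of h] by simp

lemma S_one: "S 1 = 1"
proof (rule separation)
  fix f assume f: "LF f"
  have "(\<Sum>(x,y)\<leftarrow>\<Delta> 1. f (S x * y)) = f (S 1 * 1)"
    by (rule DS_one) (auto intro!: LF_comp[OF f])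
  moreover have "(\<Sum>(x,y)\<leftarrow>\<Delta> 1. f (S x * y)) = f 1"
    using antiL_f[OF f, of 1] by (simp add: e_one)
  ultimately show "f (S 1) = f 1" by simp
qed

lemma S_mult: "S (a * b) = S b * S a"
proof (rule separation)
  fix f assume f: "LF f"
  note fc = LF_comp[OF f]
  define W where "W = (\<Sum>(xa,ya)\<leftarrow>\<Delta> a. \<Sum>(a2,a3)\<leftarrow>\<Delta> ya. \<Sum>(xb,yb)\<leftarrow>\<Delta> b. \<Sum>(b2,b3)\<leftarrow>\<Delta> yb.
        f (S (xa * xb) * a2 * (b2 * S b3) * S a3))"
  have "W = (\<Sum>(xa,ya)\<leftarrow>\<Delta> a. \<Sum>(a2,a3)\<leftarrow>\<Delta> ya. \<Sum>(xb,yb)\<leftarrow>\<Delta> b. \<epsilon> yb * f (S (xa * xb) * (a2 * S a3)))"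
  proof -
    have *: "(\<Sum>(b2,b3)\<leftarrow>\<Delta> yb. f (S (xa * xb) * a2 * (b2 * S b3) * S a3)) = \<epsilon> yb * f (S (xa * xb) * (a2 * S a3))"
      for xa xb a2 a3 yb
      proof -
        have L: "LF (\<lambda>z. f (S (xa * xb) * a2 * z * S a3))" by (auto intro!: fc)
        show ?thesis using antiR_f[OF L, of yb] by (simp add: mult.assoc mult.assoc)
      qed
    show ?thesis unfolding W_def by (simp only: *)
  qed
  also have "\<dots> = (\<Sum>(xa,ya)\<leftarrow>\<Delta> a. \<Sum>(xb,yb)\<leftarrow>\<Delta> b. \<Sum>(a2,a3)\<leftarrow>\<Delta> ya. \<epsilon> yb * f (S (xa * xb) * (a2 * S a3)))"
    by (simp only: sum_list_swap[of _ "\<Delta> b"] case_prod_unfold)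
  also have "\<dots> = (\<Sum>(xa,ya)\<leftarrow>\<Delta> a. \<Sum>(xb,yb)\<leftarrow>\<Delta> b. \<epsilon> ya * (\<epsilon> yb * f (S (xa * xb))))"
  proof -
    have *: "(\<Sum>(a2,a3)\<leftarrow>\<Delta> ya. \<epsilon> yb * f (S (xa * xb) * (a2 * S a3))) = \<epsilon> ya * (\<epsilon> yb * f (S (xa * xb)))"
      for xa xb ya yb
      proof -
        have L: "LF (\<lambda>z. \<epsilon> yb * f (S (xa * xb) * z))" by (auto intro!: fc)
        show ?thesis using antiR_f[OF L, of ya] by (simp add: mult.assoc )
      qed
    show ?thesis by (simp only: *)
  qed
  also have "\<dots> = (\<Sum>(xa,ya)\<leftarrow>\<Delta> a. \<epsilon> ya * f (S (xa * b)))"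
  proof -
    have *: "(\<Sum>(xb,yb)\<leftarrow>\<Delta> b. \<epsilon> ya * (\<epsilon> yb * f (S (xa * xb)))) = \<epsilon> ya * f (S (xa * b))" for xa ya
      proof -
        have L: "LF (\<lambda>z. f (S (xa * z)))" by (auto intro!: fc)
        show ?thesis using counitR_f[OF L, of b] by (simp add: mult.assoc sum_list_const_mult case_prod_unfold)
      qed
    show ?thesis by (simp only: *)
  qed
  also have "\<dots> = f (S (a * b))"
    proof -
        have L: "LF (\<lambda>z. f (S (z * b)))" by (auto intro!: fc)
        show ?thesis using counitR_f[OF L, of a] by (simp add: mult.assoc )
      qed
  finally have W1: "W = f (S (a * b))" .
  have "W = (\<Sum>(xa,ya)\<leftarrow>\<Delta> a. \<Sum>(a1,a2)\<leftarrow>\<Delta> xa. \<Sum>(xb,yb)\<leftarrow>\<Delta> b. \<Sum>(b1,b2)\<leftarrow>\<Delta> xb.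
        f (S (a1 * b1) * a2 * (b2 * S yb) * S ya))"
  proof -
    have b: "(\<Sum>(xb,yb)\<leftarrow>\<Delta> b. \<Sum>(b2,b3)\<leftarrow>\<Delta> yb. f (S (xa * xb) * a2 * (b2 * S b3) * S a3)) =
       (\<Sum>(xb,yb)\<leftarrow>\<Delta> b. \<Sum>(b1,b2)\<leftarrow>\<Delta> xb. f (S (xa * b1) * a2 * (b2 * S yb) * S a3))" for xa a2 a3
      by (rule coass2) (auto intro!: fc)
    have a: "(\<Sum>(xa,ya)\<leftarrow>\<Delta> a. \<Sum>(a2,a3)\<leftarrow>\<Delta> ya. \<Sum>(xb,yb)\<leftarrow>\<Delta> b. \<Sum>(b1,b2)\<leftarrow>\<Delta> xb. f (S (xa * b1) * a2 * (b2 * S yb) * S a3))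
      = (\<Sum>(xa,ya)\<leftarrow>\<Delta> a. \<Sum>(a1,a2)\<leftarrow>\<Delta> xa. \<Sum>(xb,yb)\<leftarrow>\<Delta> b. \<Sum>(b1,b2)\<leftarrow>\<Delta> xb. f (S (a1 * b1) * a2 * (b2 * S yb) * S ya))"
      by (rule coass2) (auto intro!: fc)
    show ?thesis unfolding W_def by (simp only: b a)
  qed
  also have "\<dots> = (\<Sum>(xa,ya)\<leftarrow>\<Delta> a. \<Sum>(xb,yb)\<leftarrow>\<Delta> b. \<Sum>(a1,a2)\<leftarrow>\<Delta> xa. \<Sum>(b1,b2)\<leftarrow>\<Delta> xb.
        f (S (a1 * b1) * (a2 * b2) * (S yb * S ya)))"
    by (simp only: sum_list_swap[of _ "\<Delta> b"] case_prod_unfold mult.assoc)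
  also have "\<dots> = (\<Sum>(xa,ya)\<leftarrow>\<Delta> a. \<Sum>(xb,yb)\<leftarrow>\<Delta> b. \<epsilon> xa * (\<epsilon> xb * f (S yb * S ya)))"
  proof -
    have *: "(\<Sum>(a1,a2)\<leftarrow>\<Delta> xa. \<Sum>(b1,b2)\<leftarrow>\<Delta> xb. f (S (a1 * b1) * (a2 * b2) * (S yb * S ya)))
       = \<epsilon> xa * (\<epsilon> xb * f (S yb * S ya))" for xa xb ya yb
    proof -
      have "(\<Sum>(a1,a2)\<leftarrow>\<Delta> xa. \<Sum>(b1,b2)\<leftarrow>\<Delta> xb. f (S (a1 * b1) * (a2 * b2) * (S yb * S ya)))
          = (\<Sum>(c1,c2)\<leftarrow>\<Delta> (xa * xb). f (S c1 * c2 * (S yb * S ya)))"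
        by (rule DS_mult[symmetric]) (auto intro!: fc)
      also have "\<dots> = \<epsilon> (xa * xb) * f (1 * (S yb * S ya))"
        proof -
        have L: "LF (\<lambda>z. f (z * (S yb * S ya)))" by (auto intro!: fc)
        show ?thesis using antiL_f[OF L, of "xa * xb"] by (simp add: mult.assoc )
      qed
      finally show ?thesis by (simp add: e_mult)
    qed
    show ?thesis by (simp only: *)
  qed
  also have "\<dots> = (\<Sum>(xa,ya)\<leftarrow>\<Delta> a. \<epsilon> xa * f (S b * S ya))"
  proof -
    have *: "(\<Sum>(xb,yb)\<leftarrow>\<Delta> b. \<epsilon> xa * (\<epsilon> xb * f (S yb * S ya))) = \<epsilon> xa * f (S b * S ya)" for xa ya
      proof -
        have L: "LF (\<lambda>z. f (S z * S ya))" by (auto intro!: fc)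
        show ?thesis using counitL_f[OF L, of b] by (simp add: mult.assoc sum_list_const_mult case_prod_unfold)
      qed
    show ?thesis by (simp only: *)
  qed
  also have "\<dots> = f (S b * S a)"
    proof -
        have L: "LF (\<lambda>z. f (S b * S z))" by (auto intro!: fc)
        show ?thesis using counitL_f[OF L, of a] by (simp add: mult.assoc )
      qed
  finally show "f (S (a * b)) = f (S b * S a)" using W1 by simp
qed

end


lemma swap_pp: "(\<Sum>(a,b)\<leftarrow>xs. \<Sum>(c,d)\<leftarrow>ys. (F a b c d :: 'k::comm_monoid_add)) = (\<Sum>(c,d)\<leftarrow>ys. \<Sum>(a,b)\<leftarrow>xs. F a b c d)"
  unfolding case_prod_unfold by (rule sum_list_swap)
lemma swap_pt: "(\<Sum>(a,b)\<leftarrow>xs. \<Sum>(c,d,e)\<leftarrow>ys. (F a b c d e :: 'k::comm_monoid_add)) = (\<Sum>(c,d,e)\<leftarrow>ys. \<Sum>(a,b)\<leftarrow>xs. F a b c d e)"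
  unfolding case_prod_unfold by (rule sum_list_swap)
lemma swap_tp: "(\<Sum>(c,d,e)\<leftarrow>ys. \<Sum>(a,b)\<leftarrow>xs. (F a b c d e :: 'k::comm_monoid_add)) = (\<Sum>(a,b)\<leftarrow>xs. \<Sum>(c,d,e)\<leftarrow>ys. F a b c d e)"
  unfolding case_prod_unfold by (rule sum_list_swap)
lemma swap_tt: "(\<Sum>(a,b,c)\<leftarrow>xs. \<Sum>(d,e,g)\<leftarrow>ys. (F a b c d e g :: 'k::comm_monoid_add)) = (\<Sum>(d,e,g)\<leftarrow>ys. \<Sum>(a,b,c)\<leftarrow>xs. F a b c d e g)"
  unfolding case_prod_unfold by (rule sum_list_swap)

context HA
begin

definition T where "T = inv S"

lemma S_T[simp]: "S (T x) = x" unfolding T_def using S_bij by (simp add: bij_is_surj surj_f_inv_f)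
lemma T_S[simp]: "T (S x) = x" unfolding T_def using S_bij by (simp add: bij_is_inj)
lemma S_inj: "S a = S b \<Longrightarrow> a = b" by (metis T_S)

lemma linH_T[intro!]: "linH \<phi> \<Longrightarrow> linH (\<lambda>x. T (\<phi> x))"
  unfolding linH_def by (metis S_T S_add S_scale T_S)

lemma T_one: "T 1 = 1" by (metis S_one T_S)

lemma T_mult_flip: "T y2 * y1 = T (S y1 * y2)"
  by (metis S_T S_mult T_S)

lemma HS_f: assumes "LF \<Phi>" shows "(\<Sum>(y1,y2)\<leftarrow>\<Delta> y. \<Phi> (T y2 * y1)) = \<epsilon> y * \<Phi> 1"
proof -
  have L: "LF (\<lambda>z. \<Phi> (T z))" by (rule LF_comp[OF assms]) auto
  show ?thesis using antiL_f[OF L, of y] by (simp add: T_mult_flip T_one)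
qed

end

locale SQ = HA scale \<Delta> \<epsilon> S
  for scale :: "'k::field \<Rightarrow> 'h::ring_1 \<Rightarrow> 'h"
    and \<Delta> :: "'h \<Rightarrow> ('h \<times> 'h) list" and \<epsilon> :: "'h \<Rightarrow> 'k" and S :: "'h \<Rightarrow> 'h" +
  fixes R :: "('h \<times> 'h) list"
  assumes sq: "semiquasitriangular scale \<Delta> \<epsilon> S R"
begin

lemma inv_ex: "\<exists>Q. teq2 scale (tmul2 R Q) [(1, 1)] \<and> teq2 scale (tmul2 Q R) [(1, 1)]"
  and ax1_t: "teq3 scale [(x1, x2, r2). (r1, r2) \<leftarrow> R, (x1, x2) \<leftarrow> \<Delta> r1]
                [(r1, s1, r2 * s2). (r1, r2) \<leftarrow> R, (s1, s2) \<leftarrow> R]"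
  and ax2_t: "teq3 scale [(r1, y1, y2). (r1, r2) \<leftarrow> R, (y1, y2) \<leftarrow> \<Delta> r2]
                [(r1 * s1, s2, r2). (r1, r2) \<leftarrow> R, (s1, s2) \<leftarrow> R]"
  and ax3_t: "teq3 scale [(r1, y2 * s1, y1 * s2). (r1, r2) \<leftarrow> R, (y1, y2) \<leftarrow> \<Delta> r2, (s1, s2) \<leftarrow> R]
                [(r1, s1 * y1, s2 * y2). (r1, r2) \<leftarrow> R, (y1, y2) \<leftarrow> \<Delta> r2, (s1, s2) \<leftarrow> R]"
  and ax4_t: "teq3 scale [(x2 * s1, x1 * s2, r2). (r1, r2) \<leftarrow> R, (x1, x2) \<leftarrow> \<Delta> r1, (s1, s2) \<leftarrow> R]
                [(s1 * x1, s2 * x2, r2). (r1, r2) \<leftarrow> R, (x1, x2) \<leftarrow> \<Delta> r1, (s1, s2) \<leftarrow> R]"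
  and ax5_t: "\<forall>h. \<exists>ys. (\<forall>(a, z) \<in> set ys. z \<in> centre) \<and> teq2 scale (nu \<Delta> S R h) ys"
  using sq unfolding semiquasitriangular_def by (elim conjE; simp only:)+

definition Q where "Q = (SOME Q. teq2 scale (tmul2 R Q) [(1, 1)] \<and> teq2 scale (tmul2 Q R) [(1, 1)])"

lemma Q_t: "teq2 scale (tmul2 R Q) [(1, 1)]" "teq2 scale (tmul2 Q R) [(1, 1)]"
  using someI_ex[OF inv_ex] unfolding Q_def by auto

lemma Q1:
  assumes "\<And>a. LF (\<Psi> a)" "\<And>b. LF (\<lambda>a. \<Psi> a b)"
  shows "(\<Sum>(r1,r2)\<leftarrow>R. \<Sum>(q1,q2)\<leftarrow>Q. \<Psi> (r1 * q1) (r2 * q2)) = \<Psi> 1 1"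
  using K2[OF Q_t(1) assms] unfolding tmul2_def by (simp add: sum_list_concat_map o_def case_prod_unfold)

lemma Q2:
  assumes "\<And>a. LF (\<Psi> a)" "\<And>b. LF (\<lambda>a. \<Psi> a b)"
  shows "(\<Sum>(q1,q2)\<leftarrow>Q. \<Sum>(r1,r2)\<leftarrow>R. \<Psi> (q1 * r1) (q2 * r2)) = \<Psi> 1 1"
  using K2[OF Q_t(2) assms] unfolding tmul2_def by (simp add: sum_list_concat_map o_def case_prod_unfold)

lemma ax1:
  assumes "\<And>a b. LF (\<Psi> a b)" "\<And>a d. LF (\<lambda>b. \<Psi> a b d)" "\<And>b d. LF (\<lambda>a. \<Psi> a b d)"
  shows "(\<Sum>(r1,r2)\<leftarrow>R. \<Sum>(x1,x2)\<leftarrow>\<Delta> r1. \<Psi> x1 x2 r2) = (\<Sum>(r1,r2)\<leftarrow>R. \<Sum>(s1,s2)\<leftarrow>R. \<Psi> r1 s1 (r2 * s2))"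
  using K3[OF ax1_t assms] by (simp add: sum_list_concat_map o_def case_prod_unfold)

lemma ax2:
  assumes "\<And>a b. LF (\<Psi> a b)" "\<And>a d. LF (\<lambda>b. \<Psi> a b d)" "\<And>b d. LF (\<lambda>a. \<Psi> a b d)"
  shows "(\<Sum>(r1,r2)\<leftarrow>R. \<Sum>(y1,y2)\<leftarrow>\<Delta> r2. \<Psi> r1 y1 y2) = (\<Sum>(r1,r2)\<leftarrow>R. \<Sum>(s1,s2)\<leftarrow>R. \<Psi> (r1 * s1) s2 r2)"
  using K3[OF ax2_t assms] by (simp add: sum_list_concat_map o_def case_prod_unfold)

lemma ax3:
  assumes "\<And>a b. LF (\<Psi> a b)" "\<And>a d. LF (\<lambda>b. \<Psi> a b d)" "\<And>b d. LF (\<lambda>a. \<Psi> a b d)"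
  shows "(\<Sum>(r1,r2)\<leftarrow>R. \<Sum>(y1,y2)\<leftarrow>\<Delta> r2. \<Sum>(s1,s2)\<leftarrow>R. \<Psi> r1 (y2 * s1) (y1 * s2))
       = (\<Sum>(r1,r2)\<leftarrow>R. \<Sum>(y1,y2)\<leftarrow>\<Delta> r2. \<Sum>(s1,s2)\<leftarrow>R. \<Psi> r1 (s1 * y1) (s2 * y2))"
  using K3[OF ax3_t assms] by (simp add: sum_list_concat_map o_def case_prod_unfold)

lemma ax4:
  assumes "\<And>a b. LF (\<Psi> a b)" "\<And>a d. LF (\<lambda>b. \<Psi> a b d)" "\<And>b d. LF (\<lambda>a. \<Psi> a b d)"
  shows "(\<Sum>(r1,r2)\<leftarrow>R. \<Sum>(x1,x2)\<leftarrow>\<Delta> r1. \<Sum>(s1,s2)\<leftarrow>R. \<Psi> (x2 * s1) (x1 * s2) r2)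
       = (\<Sum>(r1,r2)\<leftarrow>R. \<Sum>(x1,x2)\<leftarrow>\<Delta> r1. \<Sum>(s1,s2)\<leftarrow>R. \<Psi> (s1 * x1) (s2 * x2) r2)"
  using K3[OF ax4_t assms] by (simp add: sum_list_concat_map o_def case_prod_unfold)

end


lemma sl_cong2: "(\<And>a b. F a b = G a b) \<Longrightarrow> (\<Sum>(a,b)\<leftarrow>xs. F a b) = (\<Sum>(a,b)\<leftarrow>xs. G a b)"
  by simp

context HA
begin

lemma contract: assumes "LF \<Phi>"
  shows "(\<Sum>(a,b)\<leftarrow>xs. k a * \<Phi> b) = \<Phi> (\<Sum>(a,b)\<leftarrow>xs. scale (k a) b)"
  by (simp add: lf_sum_list2[OF assms] lf_scale[OF assms])

lemma contract': assumes "LF \<Phi>"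
  shows "(\<Sum>(a,b)\<leftarrow>xs. k b * \<Phi> a) = \<Phi> (\<Sum>(a,b)\<leftarrow>xs. scale (k b) a)"
  by (simp add: lf_sum_list2[OF assms] lf_scale[OF assms])

lemma one_sep: "\<exists>f. LF f \<and> f 1 \<noteq> 0"
proof (rule ccontr)
  assume "\<not> ?thesis"
  hence "(1::'h) = 0" by (intro separation) (auto simp: lf_zero)
  thus False by simp
qed

end

context SQ
begin

lemma R1: "(\<Sum>(r1,r2)\<leftarrow>R. scale (\<epsilon> r1) r2) = 1"
proof -
  define e where "e = (\<Sum>(r1,r2)\<leftarrow>R. scale (\<epsilon> r1) r2)"
  have key: "f 1 * g 1 = f 1 * g e" if f: "LF f" and g: "LF g" for f g
  proof -
    note fc = LF_comp[OF f] and gc = LF_comp[OF g]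
    have "f 1 * g 1 = (\<Sum>(r1,r2)\<leftarrow>R. \<Sum>(q1,q2)\<leftarrow>Q. f (r1 * q1) * g (r2 * q2))"
      by (subst Q1[of "\<lambda>A B. f A * g B"]) (auto intro!: fc gc)
    also have "\<dots> = (\<Sum>(r1,r2)\<leftarrow>R. \<Sum>(x1,x2)\<leftarrow>\<Delta> r1. \<epsilon> x1 * (\<Sum>(q1,q2)\<leftarrow>Q. f (x2 * q1) * g (r2 * q2)))"
    proof (rule sl_cong2)
      fix a b
      show "(\<Sum>(q1,q2)\<leftarrow>Q. f (a * q1) * g (b * q2)) = (\<Sum>(x1,x2)\<leftarrow>\<Delta> a. \<epsilon> x1 * (\<Sum>(q1,q2)\<leftarrow>Q. f (x2 * q1) * g (b * q2)))"
        by (subst counitL_f[of "\<lambda>y. \<Sum>(q1,q2)\<leftarrow>Q. f (y * q1) * g (b * q2)"]) (auto intro!: fc gc)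
    qed
    also have "\<dots> = (\<Sum>(r1,r2)\<leftarrow>R. \<Sum>(s1,s2)\<leftarrow>R. \<epsilon> r1 * (\<Sum>(q1,q2)\<leftarrow>Q. f (s1 * q1) * g ((r2 * s2) * q2)))"
      by (rule ax1) (auto intro!: fc gc)
    also have "\<dots> = (\<Sum>(s1,s2)\<leftarrow>R. \<Sum>(r1,r2)\<leftarrow>R. \<epsilon> r1 * (\<Sum>(q1,q2)\<leftarrow>Q. f (s1 * q1) * g ((r2 * s2) * q2)))"
      by (rule swap_pp)
    also have "\<dots> = (\<Sum>(s1,s2)\<leftarrow>R. \<Sum>(q1,q2)\<leftarrow>Q. f (s1 * q1) * g ((e * s2) * q2))"
    proof (rule sl_cong2)
      fix a b
      show "(\<Sum>(r1,r2)\<leftarrow>R. \<epsilon> r1 * (\<Sum>(q1,q2)\<leftarrow>Q. f (a * q1) * g ((r2 * b) * q2))) = (\<Sum>(q1,q2)\<leftarrow>Q. f (a * q1) * g ((e * b) * q2))"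
        unfolding e_def by (subst contract[of "\<lambda>z. \<Sum>(q1,q2)\<leftarrow>Q. f (a * q1) * g ((z * b) * q2)"]) (auto intro!: fc gc)
    qed
    also have "\<dots> = f 1 * g e"
      unfolding mult.assoc by (subst Q1[of "\<lambda>A B. f A * g (e * B)"]) (auto intro!: fc gc)
    finally show ?thesis .
  qed
  obtain f where f: "LF f" "f 1 \<noteq> 0" using one_sep by blast
  have "e = 1" by (rule separation) (use key[OF f(1)] f(2) in \<open>metis mult_left_cancel\<close>)
  thus ?thesis unfolding e_def .
qed

lemma R2: "(\<Sum>(r1,r2)\<leftarrow>R. scale (\<epsilon> r2) r1) = 1"
proof -
  define e where "e = (\<Sum>(r1,r2)\<leftarrow>R. scale (\<epsilon> r2) r1)"
  have key: "f 1 * g 1 = f e * g 1" if f: "LF f" and g: "LF g" for f g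
  proof -
    note fc = LF_comp[OF f] and gc = LF_comp[OF g]
    have "f 1 * g 1 = (\<Sum>(r1,r2)\<leftarrow>R. \<Sum>(q1,q2)\<leftarrow>Q. f (r1 * q1) * g (r2 * q2))"
      by (subst Q1[of "\<lambda>A B. f A * g B"]) (auto intro!: fc gc)
    also have "\<dots> = (\<Sum>(r1,r2)\<leftarrow>R. \<Sum>(y1,y2)\<leftarrow>\<Delta> r2. \<epsilon> y2 * (\<Sum>(q1,q2)\<leftarrow>Q. f (r1 * q1) * g (y1 * q2)))"
    proof (rule sl_cong2)
      fix a b
      show "(\<Sum>(q1,q2)\<leftarrow>Q. f (a * q1) * g (b * q2)) = (\<Sum>(y1,y2)\<leftarrow>\<Delta> b. \<epsilon> y2 * (\<Sum>(q1,q2)\<leftarrow>Q. f (a * q1) * g (y1 * q2)))"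
        by (subst counitR_f[of "\<lambda>y. \<Sum>(q1,q2)\<leftarrow>Q. f (a * q1) * g (y * q2)"]) (auto intro!: fc gc)
    qed
    also have "\<dots> = (\<Sum>(r1,r2)\<leftarrow>R. \<Sum>(s1,s2)\<leftarrow>R. \<epsilon> r2 * (\<Sum>(q1,q2)\<leftarrow>Q. f ((r1 * s1) * q1) * g (s2 * q2)))"
      by (rule ax2) (auto intro!: fc gc)
    also have "\<dots> = (\<Sum>(s1,s2)\<leftarrow>R. \<Sum>(r1,r2)\<leftarrow>R. \<epsilon> r2 * (\<Sum>(q1,q2)\<leftarrow>Q. f ((r1 * s1) * q1) * g (s2 * q2)))"
      by (rule swap_pp)
    also have "\<dots> = (\<Sum>(s1,s2)\<leftarrow>R. \<Sum>(q1,q2)\<leftarrow>Q. f ((e * s1) * q1) * g (s2 * q2))"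
    proof (rule sl_cong2)
      fix a b
      show "(\<Sum>(r1,r2)\<leftarrow>R. \<epsilon> r2 * (\<Sum>(q1,q2)\<leftarrow>Q. f ((r1 * a) * q1) * g (b * q2))) = (\<Sum>(q1,q2)\<leftarrow>Q. f ((e * a) * q1) * g (b * q2))"
        unfolding e_def by (subst contract'[of "\<lambda>z. \<Sum>(q1,q2)\<leftarrow>Q. f ((z * a) * q1) * g (b * q2)"]) (auto intro!: fc gc)
    qed
    also have "\<dots> = f e * g 1"
      unfolding mult.assoc by (subst Q1[of "\<lambda>A B. f (e * A) * g B"]) (auto intro!: fc gc)
    finally show ?thesis .
  qed
  obtain g where g: "LF g" "g 1 \<noteq> 0" using one_sep by blast
  have "e = 1" by (rule separation) (use key[OF _ g(1)] g(2) in \<open>metis mult_right_cancel\<close>)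
  thus ?thesis unfolding e_def .
qed

lemma R3:
  assumes l1: "\<And>a. LF (\<Psi> a)" and l2: "\<And>b. LF (\<lambda>a. \<Psi> a b)"
  shows "(\<Sum>(r1,r2)\<leftarrow>R. \<Sum>(s1,s2)\<leftarrow>R. \<Psi> (S r1 * s1) (r2 * s2)) = \<Psi> 1 1"
proof -
  note c1 = LF_comp[OF l1] and c2 = LF_comp[OF l2]
  have "(\<Sum>(r1,r2)\<leftarrow>R. \<Sum>(s1,s2)\<leftarrow>R. \<Psi> (S r1 * s1) (r2 * s2)) = (\<Sum>(r1,r2)\<leftarrow>R. \<Sum>(x1,x2)\<leftarrow>\<Delta> r1. \<Psi> (S x1 * x2) r2)"
    by (rule ax1[symmetric]) (auto intro!: c1 c2)
  also have "\<dots> = (\<Sum>(r1,r2)\<leftarrow>R. \<epsilon> r1 * \<Psi> 1 r2)"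
  proof (rule sl_cong2)
    fix a b show "(\<Sum>(x1,x2)\<leftarrow>\<Delta> a. \<Psi> (S x1 * x2) b) = \<epsilon> a * \<Psi> 1 b"
      by (rule antiL_f[of "\<lambda>z. \<Psi> z b"]) (auto intro!: c2)
  qed
  also have "\<dots> = \<Psi> 1 1" by (subst contract[OF l1]) (simp add: R1)
  finally show ?thesis .
qed

lemma R4:
  assumes l1: "\<And>a. LF (\<Psi> a)" and l2: "\<And>b. LF (\<lambda>a. \<Psi> a b)"
  shows "(\<Sum>(r1,r2)\<leftarrow>R. \<Sum>(s1,s2)\<leftarrow>R. \<Psi> (r1 * s1) (T r2 * s2)) = \<Psi> 1 1"
proof -
  note c1 = LF_comp[OF l1] and c2 = LF_comp[OF l2]
  have "(\<Sum>(r1,r2)\<leftarrow>R. \<Sum>(s1,s2)\<leftarrow>R. \<Psi> (r1 * s1) (T r2 * s2)) = (\<Sum>(r1,r2)\<leftarrow>R. \<Sum>(y1,y2)\<leftarrow>\<Delta> r2. \<Psi> r1 (T y2 * y1))"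
    by (rule ax2[symmetric]) (auto intro!: c1 c2)
  also have "\<dots> = (\<Sum>(r1,r2)\<leftarrow>R. \<epsilon> r2 * \<Psi> r1 1)"
  proof (rule sl_cong2)
    fix a b show "(\<Sum>(y1,y2)\<leftarrow>\<Delta> b. \<Psi> a (T y2 * y1)) = \<epsilon> b * \<Psi> a 1"
      by (rule HS_f) (auto intro!: c1)
  qed
  also have "\<dots> = \<Psi> 1 1" by (subst contract'[OF l2]) (simp add: R2)
  finally show ?thesis .
qed

lemma R5a:
  assumes l1: "\<And>a. LF (\<Psi> a)" and l2: "\<And>b. LF (\<lambda>a. \<Psi> a b)"
  shows "(\<Sum>(r1,r2)\<leftarrow>R. \<Psi> (S r1) r2) = (\<Sum>(q1,q2)\<leftarrow>Q. \<Psi> q1 q2)"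
proof -
  note c1 = LF_comp[OF l1] and c2 = LF_comp[OF l2]
  have "(\<Sum>(r1,r2)\<leftarrow>R. \<Psi> (S r1) r2) = (\<Sum>(r1,r2)\<leftarrow>R. \<Sum>(s1,s2)\<leftarrow>R. \<Sum>(q1,q2)\<leftarrow>Q. \<Psi> (S r1 * (s1 * q1)) (r2 * (s2 * q2)))"
  proof (rule sl_cong2)
    fix a b show "\<Psi> (S a) b = (\<Sum>(s1,s2)\<leftarrow>R. \<Sum>(q1,q2)\<leftarrow>Q. \<Psi> (S a * (s1 * q1)) (b * (s2 * q2)))"
      by (subst Q1[of "\<lambda>A B. \<Psi> (S a * A) (b * B)"]) (auto intro!: c1 c2)
  qed
  also have "\<dots> = (\<Sum>(q1,q2)\<leftarrow>Q. \<Sum>(r1,r2)\<leftarrow>R. \<Sum>(s1,s2)\<leftarrow>R. \<Psi> (S r1 * (s1 * q1)) (r2 * (s2 * q2)))"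
    by (simp only: swap_pp[of _ Q])
  also have "\<dots> = (\<Sum>(q1,q2)\<leftarrow>Q. \<Psi> q1 q2)"
  proof (rule sl_cong2)
    fix a b show "(\<Sum>(r1,r2)\<leftarrow>R. \<Sum>(s1,s2)\<leftarrow>R. \<Psi> (S r1 * (s1 * a)) (r2 * (s2 * b))) = \<Psi> a b"
      unfolding mult.assoc[symmetric] by (subst R3[of "\<lambda>A B. \<Psi> (A * a) (B * b)"]) (auto intro!: c1 c2)
  qed
  finally show ?thesis .
qed

lemma R5b:
  assumes l1: "\<And>a. LF (\<Psi> a)" and l2: "\<And>b. LF (\<lambda>a. \<Psi> a b)"
  shows "(\<Sum>(r1,r2)\<leftarrow>R. \<Psi> r1 (T r2)) = (\<Sum>(q1,q2)\<leftarrow>Q. \<Psi> q1 q2)"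
proof -
  note c1 = LF_comp[OF l1] and c2 = LF_comp[OF l2]
  have "(\<Sum>(r1,r2)\<leftarrow>R. \<Psi> r1 (T r2)) = (\<Sum>(r1,r2)\<leftarrow>R. \<Sum>(s1,s2)\<leftarrow>R. \<Sum>(q1,q2)\<leftarrow>Q. \<Psi> (r1 * (s1 * q1)) (T r2 * (s2 * q2)))"
  proof (rule sl_cong2)
    fix a b show "\<Psi> a (T b) = (\<Sum>(s1,s2)\<leftarrow>R. \<Sum>(q1,q2)\<leftarrow>Q. \<Psi> (a * (s1 * q1)) (T b * (s2 * q2)))"
      by (subst Q1[of "\<lambda>A B. \<Psi> (a * A) (T b * B)"]) (auto intro!: c1 c2)
  qed
  also have "\<dots> = (\<Sum>(q1,q2)\<leftarrow>Q. \<Sum>(r1,r2)\<leftarrow>R. \<Sum>(s1,s2)\<leftarrow>R. \<Psi> (r1 * (s1 * q1)) (T r2 * (s2 * q2)))"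
    by (simp only: swap_pp[of _ Q])
  also have "\<dots> = (\<Sum>(q1,q2)\<leftarrow>Q. \<Psi> q1 q2)"
  proof (rule sl_cong2)
    fix a b show "(\<Sum>(r1,r2)\<leftarrow>R. \<Sum>(s1,s2)\<leftarrow>R. \<Psi> (r1 * (s1 * a)) (T r2 * (s2 * b))) = \<Psi> a b"
      unfolding mult.assoc[symmetric] by (subst R4[of "\<lambda>A B. \<Psi> (A * a) (B * b)"]) (auto intro!: c1 c2)
  qed
  finally show ?thesis .
qed

lemma R7:
  assumes l1: "\<And>a. LF (\<Psi> a)" and l2: "\<And>b. LF (\<lambda>a. \<Psi> a b)"
  shows "(\<Sum>(r1,r2)\<leftarrow>R. \<Sum>(s1,s2)\<leftarrow>R. \<Psi> (r1 * S s1) (r2 * s2)) = \<Psi> 1 1"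
proof -
  note c1 = LF_comp[OF l1] and c2 = LF_comp[OF l2]
  have "(\<Sum>(r1,r2)\<leftarrow>R. \<Sum>(s1,s2)\<leftarrow>R. \<Psi> (r1 * S s1) (r2 * s2)) = (\<Sum>(r1,r2)\<leftarrow>R. \<Sum>(q1,q2)\<leftarrow>Q. \<Psi> (r1 * q1) (r2 * q2))"
  proof (rule sl_cong2)
    fix a b show "(\<Sum>(s1,s2)\<leftarrow>R. \<Psi> (a * S s1) (b * s2)) = (\<Sum>(q1,q2)\<leftarrow>Q. \<Psi> (a * q1) (b * q2))"
      by (rule R5a[of "\<lambda>A B. \<Psi> (a * A) (b * B)"]) (auto intro!: c1 c2)
  qed
  also have "\<dots> = \<Psi> 1 1" by (rule Q1) (auto intro!: c1 c2)
  finally show ?thesis .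
qed

lemma R6:
  assumes l1: "\<And>a. LF (\<Psi> a)" and l2: "\<And>b. LF (\<lambda>a. \<Psi> a b)"
  shows "(\<Sum>(r1,r2)\<leftarrow>R. \<Psi> (S r1) (S r2)) = (\<Sum>(r1,r2)\<leftarrow>R. \<Psi> r1 r2)"
proof -
  note c1 = LF_comp[OF l1] and c2 = LF_comp[OF l2]
  have "(\<Sum>(r1,r2)\<leftarrow>R. \<Psi> (S r1) (S r2)) = (\<Sum>(q1,q2)\<leftarrow>Q. \<Psi> q1 (S q2))"
    by (rule R5a[of "\<lambda>A B. \<Psi> A (S B)"]) (auto intro!: c1 c2)
  also have "\<dots> = (\<Sum>(r1,r2)\<leftarrow>R. \<Psi> r1 (S (T r2)))"
    by (rule R5b[of "\<lambda>A B. \<Psi> A (S B)", symmetric]) (auto intro!: c1 c2)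
  finally show ?thesis by simp
qed

end


lemma swap22: "(\<Sum>(a,b)\<leftarrow>xs. \<Sum>(c,d)\<leftarrow>ys. \<Sum>(x,y)\<leftarrow>zs. \<Sum>(y1,y2)\<leftarrow>ws x y. (F a b c d x y y1 y2 :: 'k::comm_monoid_add))
  = (\<Sum>(x,y)\<leftarrow>zs. \<Sum>(y1,y2)\<leftarrow>ws x y. \<Sum>(a,b)\<leftarrow>xs. \<Sum>(c,d)\<leftarrow>ys. F a b c d x y y1 y2)"
  by (simp only: swap_pp[where ys = zs] swap_pp[where ys = "ws _ _"])

context SQ
begin

abbreviation nuR where "nuR h \<equiv> nu \<Delta> S R h"

lemma nu_sum: "(\<Sum>(X,Z)\<leftarrow>nuR h. \<Psi> X Z) =
  (\<Sum>(r1,r2)\<leftarrow>R. \<Sum>(s1,s2)\<leftarrow>R. \<Sum>(a1,a2,a3)\<leftarrow>Delta3 \<Delta> h. \<Psi> (r2 * a2 * s2) (S a1 * S r1 * a3 * s1))"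
  unfolding nu_def by (simp add: sum_list_concat_map o_def case_prod_unfold)

lemma LF_nu[intro!]:
  assumes "\<And>a. LF (\<Psi> a)" "\<And>b. LF (\<lambda>a. \<Psi> a b)" "linH \<phi>"
  shows "LF (\<lambda>h. \<Sum>(X,Z)\<leftarrow>nuR (\<phi> h). \<Psi> X Z)"
  unfolding nu_sum using assms(3) by (auto intro!: LF_comp[OF assms(1)] LF_comp[OF assms(2)])

lemma ax4p:
  assumes l1: "\<And>p1 p2 a b. LF (\<Phi> p1 p2 a b)" and l2: "\<And>p1 p2 a d. LF (\<lambda>b. \<Phi> p1 p2 a b d)"
    and l3: "\<And>p1 p2 b d. LF (\<lambda>a. \<Phi> p1 p2 a b d)"
  shows "(\<Sum>(r1,r2)\<leftarrow>R. \<Sum>(x1,x2)\<leftarrow>\<Delta> r1. \<Sum>(p1,p2)\<leftarrow>R. \<Sum>(s1,s2)\<leftarrow>R. \<Phi> p1 p2 (x2 * s1) (x1 * s2) r2)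
       = (\<Sum>(r1,r2)\<leftarrow>R. \<Sum>(x1,x2)\<leftarrow>\<Delta> r1. \<Sum>(p1,p2)\<leftarrow>R. \<Sum>(s1,s2)\<leftarrow>R. \<Phi> p1 p2 (s1 * x1) (s2 * x2) r2)"
proof -
  have "(\<Sum>(r1,r2)\<leftarrow>R. \<Sum>(x1,x2)\<leftarrow>\<Delta> r1. \<Sum>(p1,p2)\<leftarrow>R. \<Sum>(s1,s2)\<leftarrow>R. \<Phi> p1 p2 (x2 * s1) (x1 * s2) r2)
     = (\<Sum>(r1,r2)\<leftarrow>R. \<Sum>(x1,x2)\<leftarrow>\<Delta> r1. \<Sum>(s1,s2)\<leftarrow>R. \<Sum>(p1,p2)\<leftarrow>R. \<Phi> p1 p2 (x2 * s1) (x1 * s2) r2)"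
    by (rule sl_cong2, rule sl_cong2, rule swap_pp)
  also have "\<dots> = (\<Sum>(r1,r2)\<leftarrow>R. \<Sum>(x1,x2)\<leftarrow>\<Delta> r1. \<Sum>(s1,s2)\<leftarrow>R. \<Sum>(p1,p2)\<leftarrow>R. \<Phi> p1 p2 (s1 * x1) (s2 * x2) r2)"
    by (rule ax4[of "\<lambda>A B C. \<Sum>(p1,p2)\<leftarrow>R. \<Phi> p1 p2 A B C"]) (use l1 l2 l3 in auto)
  also have "\<dots> = (\<Sum>(r1,r2)\<leftarrow>R. \<Sum>(x1,x2)\<leftarrow>\<Delta> r1. \<Sum>(p1,p2)\<leftarrow>R. \<Sum>(s1,s2)\<leftarrow>R. \<Phi> p1 p2 (s1 * x1) (s2 * x2) r2)"
    by (rule sl_cong2, rule sl_cong2, rule swap_pp)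
  finally show ?thesis .
qed

lemma ax3p:
  assumes l1: "\<And>s1 s2 p1 p2 a b. LF (\<Phi> a s1 s2 p1 p2 b)" and l2: "\<And>s1 s2 p1 p2 a d. LF (\<lambda>b. \<Phi> a s1 s2 p1 p2 b d)"
    and l3: "\<And>s1 s2 p1 p2 b d. LF (\<lambda>a. \<Phi> a s1 s2 p1 p2 b d)"
  shows "(\<Sum>(r1,r2)\<leftarrow>R. \<Sum>(y1,y2)\<leftarrow>\<Delta> r2. \<Sum>(s1,s2)\<leftarrow>R. \<Sum>(p1,p2)\<leftarrow>R. \<Sum>(t1,t2)\<leftarrow>R. \<Phi> r1 s1 s2 p1 p2 (y2 * t1) (y1 * t2))
       = (\<Sum>(r1,r2)\<leftarrow>R. \<Sum>(y1,y2)\<leftarrow>\<Delta> r2. \<Sum>(s1,s2)\<leftarrow>R. \<Sum>(p1,p2)\<leftarrow>R. \<Sum>(t1,t2)\<leftarrow>R. \<Phi> r1 s1 s2 p1 p2 (t1 * y1) (t2 * y2))"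
proof -
  have sw: "(\<Sum>(s1,s2)\<leftarrow>R. \<Sum>(p1,p2)\<leftarrow>R. \<Sum>(t1,t2)\<leftarrow>R. G s1 s2 p1 p2 t1 t2) = (\<Sum>(t1,t2)\<leftarrow>R. \<Sum>(s1,s2)\<leftarrow>R. \<Sum>(p1,p2)\<leftarrow>R. G s1 s2 p1 p2 t1 t2)"
    for G :: "'h \<Rightarrow> 'h \<Rightarrow> 'h \<Rightarrow> 'h \<Rightarrow> 'h \<Rightarrow> 'h \<Rightarrow> 'k"
  proof -
    have "(\<Sum>(s1,s2)\<leftarrow>R. \<Sum>(p1,p2)\<leftarrow>R. \<Sum>(t1,t2)\<leftarrow>R. G s1 s2 p1 p2 t1 t2) = (\<Sum>(s1,s2)\<leftarrow>R. \<Sum>(t1,t2)\<leftarrow>R. \<Sum>(p1,p2)\<leftarrow>R. G s1 s2 p1 p2 t1 t2)"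
      by (rule sl_cong2, rule swap_pp)
    also have "\<dots> = (\<Sum>(t1,t2)\<leftarrow>R. \<Sum>(s1,s2)\<leftarrow>R. \<Sum>(p1,p2)\<leftarrow>R. G s1 s2 p1 p2 t1 t2)" by (rule swap_pp)
    finally show ?thesis .
  qed
  have "(\<Sum>(r1,r2)\<leftarrow>R. \<Sum>(y1,y2)\<leftarrow>\<Delta> r2. \<Sum>(s1,s2)\<leftarrow>R. \<Sum>(p1,p2)\<leftarrow>R. \<Sum>(t1,t2)\<leftarrow>R. \<Phi> r1 s1 s2 p1 p2 (y2 * t1) (y1 * t2))
     = (\<Sum>(r1,r2)\<leftarrow>R. \<Sum>(y1,y2)\<leftarrow>\<Delta> r2. \<Sum>(t1,t2)\<leftarrow>R. \<Sum>(s1,s2)\<leftarrow>R. \<Sum>(p1,p2)\<leftarrow>R. \<Phi> r1 s1 s2 p1 p2 (y2 * t1) (y1 * t2))"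
    by (rule sl_cong2, rule sl_cong2, rule sw)
  also have "\<dots> = (\<Sum>(r1,r2)\<leftarrow>R. \<Sum>(y1,y2)\<leftarrow>\<Delta> r2. \<Sum>(t1,t2)\<leftarrow>R. \<Sum>(s1,s2)\<leftarrow>R. \<Sum>(p1,p2)\<leftarrow>R. \<Phi> r1 s1 s2 p1 p2 (t1 * y1) (t2 * y2))"
    by (rule ax3[of "\<lambda>A B C. \<Sum>(s1,s2)\<leftarrow>R. \<Sum>(p1,p2)\<leftarrow>R. \<Phi> A s1 s2 p1 p2 B C"]) (use l1 l2 l3 in auto)
  also have "\<dots> = (\<Sum>(r1,r2)\<leftarrow>R. \<Sum>(y1,y2)\<leftarrow>\<Delta> r2. \<Sum>(s1,s2)\<leftarrow>R. \<Sum>(p1,p2)\<leftarrow>R. \<Sum>(t1,t2)\<leftarrow>R. \<Phi> r1 s1 s2 p1 p2 (t1 * y1) (t2 * y2))"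
    by (rule sl_cong2, rule sl_cong2, rule sw[symmetric])
  finally show ?thesis .
qed

lemma PL:
  assumes l1: "\<And>a b. LF (\<Psi> a b)" and l2: "\<And>a d. LF (\<lambda>b. \<Psi> a b d)" and l3: "\<And>b d. LF (\<lambda>a. \<Psi> a b d)"
  shows "(\<Sum>(r1,r2)\<leftarrow>R. \<Sum>(X,Z)\<leftarrow>nuR r1. \<Psi> X Z r2) = (\<Sum>(r1,r2)\<leftarrow>R. \<Psi> r1 1 r2)"
proof -
  note c1 = LF_comp[OF l1] and c2 = LF_comp[OF l2] and c3 = LF_comp[OF l3]
  have "(\<Sum>(r1,r2)\<leftarrow>R. \<Sum>(X,Z)\<leftarrow>nuR r1. \<Psi> X Z r2) = (\<Sum>(r1,r2)\<leftarrow>R. \<Sum>(p1,p2)\<leftarrow>R. \<Sum>(t1,t2)\<leftarrow>R. \<Sum>(x,y)\<leftarrow>\<Delta> r1. \<Sum>(y1,y2)\<leftarrow>\<Delta> y.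
       \<Psi> (p2 * (y1 * t2)) (S x * (S p1 * (y2 * t1))) r2)"
    by (simp add: nu_sum D3_unfold mult.assoc)
  also have "\<dots> = (\<Sum>(r1,r2)\<leftarrow>R. \<Sum>(x,y)\<leftarrow>\<Delta> r1. \<Sum>(y1,y2)\<leftarrow>\<Delta> y. \<Sum>(p1,p2)\<leftarrow>R. \<Sum>(t1,t2)\<leftarrow>R.
       \<Psi> (p2 * (y1 * t2)) (S x * (S p1 * (y2 * t1))) r2)"
    by (rule sl_cong2, rule swap22)
  also have "\<dots> = (\<Sum>(r1,r2)\<leftarrow>R. \<Sum>(s1,s2)\<leftarrow>R. \<Sum>(y1,y2)\<leftarrow>\<Delta> s1. \<Sum>(p1,p2)\<leftarrow>R. \<Sum>(t1,t2)\<leftarrow>R.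
       \<Psi> (p2 * (y1 * t2)) (S r1 * (S p1 * (y2 * t1))) (r2 * s2))"
    by (rule ax1[of "\<lambda>x y c. \<Sum>(y1,y2)\<leftarrow>\<Delta> y. \<Sum>(p1,p2)\<leftarrow>R. \<Sum>(t1,t2)\<leftarrow>R. \<Psi> (p2 * (y1 * t2)) (S x * (S p1 * (y2 * t1))) c"])
       (auto intro!: c1 c2 c3)
  also have "\<dots> = (\<Sum>(r1,r2)\<leftarrow>R. \<Sum>(s1,s2)\<leftarrow>R. \<Sum>(y1,y2)\<leftarrow>\<Delta> s1. \<Sum>(p1,p2)\<leftarrow>R. \<Sum>(t1,t2)\<leftarrow>R.
       \<Psi> (p2 * (t2 * y2)) (S r1 * (S p1 * (t1 * y1))) (r2 * s2))"
    apply (rule sl_cong2)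
    subgoal for r1 r2
      by (rule ax4p[of "\<lambda>p1 p2 A B C. \<Psi> (p2 * B) (S r1 * (S p1 * A)) (r2 * C)"]) (auto intro!: c1 c2 c3)
    done
  also have "\<dots> = (\<Sum>(r1,r2)\<leftarrow>R. \<Sum>(s1,s2)\<leftarrow>R. \<Sum>(y1,y2)\<leftarrow>\<Delta> s1. \<Psi> y2 (S r1 * y1) (r2 * s2))"
    apply (rule sl_cong2, rule sl_cong2, rule sl_cong2)
    subgoal for r1 r2 s1 s2 y1 y2
      by (subst R3[of "\<lambda>A B. \<Psi> (B * y2) (S r1 * (A * y1)) (r2 * s2)", unfolded mult.assoc]) (auto intro!: c1 c2 c3)
    done
  also have "\<dots> = (\<Sum>(r1,r2)\<leftarrow>R. \<Sum>(x,y)\<leftarrow>\<Delta> r1. \<Sum>(y1,y2)\<leftarrow>\<Delta> y. \<Psi> y2 (S x * y1) r2)"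
    by (rule ax1[of "\<lambda>x y c. \<Sum>(y1,y2)\<leftarrow>\<Delta> y. \<Psi> y2 (S x * y1) c", symmetric]) (auto intro!: c1 c2 c3)
  also have "\<dots> = (\<Sum>(r1,r2)\<leftarrow>R. \<Sum>(x,y)\<leftarrow>\<Delta> r1. \<Sum>(x1,x2)\<leftarrow>\<Delta> x. \<Psi> y (S x1 * x2) r2)"
    apply (rule sl_cong2)
    subgoal for r1 r2 by (rule coass2[of "\<lambda>x y1 y2. \<Psi> y2 (S x * y1) r2"]) (auto intro!: c1 c2 c3)
    done
  also have "\<dots> = (\<Sum>(r1,r2)\<leftarrow>R. \<Sum>(x,y)\<leftarrow>\<Delta> r1. \<epsilon> x * \<Psi> y 1 r2)"
    apply (rule sl_cong2, rule sl_cong2)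
    subgoal for r1 r2 x y by (rule antiL_f[of "\<lambda>z. \<Psi> y z r2"]) (auto intro!: c2)
    done
  also have "\<dots> = (\<Sum>(r1,r2)\<leftarrow>R. \<Psi> r1 1 r2)"
    apply (rule sl_cong2)
    subgoal for r1 r2 by (rule counitL_f[of "\<lambda>z. \<Psi> z 1 r2"]) (auto intro!: c3)
    done
  finally show ?thesis .
qed

lemma PR:
  assumes l1: "\<And>a b. LF (\<Psi> a b)" and l2: "\<And>a d. LF (\<lambda>b. \<Psi> a b d)" and l3: "\<And>b d. LF (\<lambda>a. \<Psi> a b d)"
  shows "(\<Sum>(r1,r2)\<leftarrow>R. \<Sum>(X,Z)\<leftarrow>nuR r2. \<Psi> r1 X Z) = (\<Sum>(r1,r2)\<leftarrow>R. \<Psi> r1 r2 1)"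
proof -
  note c1 = LF_comp[OF l1] and c2 = LF_comp[OF l2] and c3 = LF_comp[OF l3]
  have "(\<Sum>(r1,r2)\<leftarrow>R. \<Sum>(X,Z)\<leftarrow>nuR r2. \<Psi> r1 X Z) = (\<Sum>(r1,r2)\<leftarrow>R. \<Sum>(p1,p2)\<leftarrow>R. \<Sum>(t1,t2)\<leftarrow>R. \<Sum>(x,y)\<leftarrow>\<Delta> r2. \<Sum>(y1,y2)\<leftarrow>\<Delta> y.
       \<Psi> r1 (p2 * (y1 * t2)) (S x * (S p1 * (y2 * t1))))"
    by (simp add: nu_sum D3_unfold mult.assoc)
  also have "\<dots> = (\<Sum>(r1,r2)\<leftarrow>R. \<Sum>(x,y)\<leftarrow>\<Delta> r2. \<Sum>(y1,y2)\<leftarrow>\<Delta> y. \<Sum>(p1,p2)\<leftarrow>R. \<Sum>(t1,t2)\<leftarrow>R.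
       \<Psi> r1 (p2 * (y1 * t2)) (S x * (S p1 * (y2 * t1))))"
    by (rule sl_cong2, rule swap22)
  also have "\<dots> = (\<Sum>(r1,r2)\<leftarrow>R. \<Sum>(s1,s2)\<leftarrow>R. \<Sum>(y1,y2)\<leftarrow>\<Delta> r2. \<Sum>(p1,p2)\<leftarrow>R. \<Sum>(t1,t2)\<leftarrow>R.
       \<Psi> (r1 * s1) (p2 * (y1 * t2)) (S s2 * (S p1 * (y2 * t1))))"
    by (rule ax2[of "\<lambda>a x y. \<Sum>(y1,y2)\<leftarrow>\<Delta> y. \<Sum>(p1,p2)\<leftarrow>R. \<Sum>(t1,t2)\<leftarrow>R. \<Psi> a (p2 * (y1 * t2)) (S x * (S p1 * (y2 * t1)))"])
       (auto intro!: c1 c2 c3)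
  also have "\<dots> = (\<Sum>(r1,r2)\<leftarrow>R. \<Sum>(y1,y2)\<leftarrow>\<Delta> r2. \<Sum>(s1,s2)\<leftarrow>R. \<Sum>(p1,p2)\<leftarrow>R. \<Sum>(t1,t2)\<leftarrow>R.
       \<Psi> (r1 * s1) (p2 * (y1 * t2)) (S s2 * (S p1 * (y2 * t1))))"
    by (rule sl_cong2, rule swap_pp)
  also have "\<dots> = (\<Sum>(r1,r2)\<leftarrow>R. \<Sum>(y1,y2)\<leftarrow>\<Delta> r2. \<Sum>(s1,s2)\<leftarrow>R. \<Sum>(p1,p2)\<leftarrow>R. \<Sum>(t1,t2)\<leftarrow>R.
       \<Psi> (r1 * s1) (p2 * (t2 * y2)) (S s2 * (S p1 * (t1 * y1))))"
    by (rule ax3p[of "\<lambda>a s1 s2 p1 p2 A B. \<Psi> (a * s1) (p2 * B) (S s2 * (S p1 * A))"]) (auto intro!: c1 c2 c3)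
  also have "\<dots> = (\<Sum>(r1,r2)\<leftarrow>R. \<Sum>(y1,y2)\<leftarrow>\<Delta> r2. \<Sum>(s1,s2)\<leftarrow>R. \<Psi> (r1 * s1) y2 (S s2 * y1))"
    apply (rule sl_cong2, rule sl_cong2, rule sl_cong2)
    subgoal for r1 r2 y1 y2 s1 s2
      by (subst R3[of "\<lambda>A B. \<Psi> (r1 * s1) (B * y2) (S s2 * (A * y1))", unfolded mult.assoc]) (auto intro!: c1 c2 c3)
    done
  also have "\<dots> = (\<Sum>(r1,r2)\<leftarrow>R. \<Sum>(s1,s2)\<leftarrow>R. \<Sum>(y1,y2)\<leftarrow>\<Delta> r2. \<Psi> (r1 * s1) y2 (S s2 * y1))"
    by (rule sl_cong2, rule swap_pp)
  also have "\<dots> = (\<Sum>(r1,r2)\<leftarrow>R. \<Sum>(x,y)\<leftarrow>\<Delta> r2. \<Sum>(y1,y2)\<leftarrow>\<Delta> y. \<Psi> r1 y2 (S x * y1))"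
    by (rule ax2[of "\<lambda>a x y. \<Sum>(y1,y2)\<leftarrow>\<Delta> y. \<Psi> a y2 (S x * y1)", symmetric]) (auto intro!: c1 c2 c3)
  also have "\<dots> = (\<Sum>(r1,r2)\<leftarrow>R. \<Sum>(x,y)\<leftarrow>\<Delta> r2. \<Sum>(x1,x2)\<leftarrow>\<Delta> x. \<Psi> r1 y (S x1 * x2))"
    apply (rule sl_cong2)
    subgoal for r1 r2 by (rule coass2[of "\<lambda>x y1 y2. \<Psi> r1 y2 (S x * y1)"]) (auto intro!: c1 c2 c3)
    done
  also have "\<dots> = (\<Sum>(r1,r2)\<leftarrow>R. \<Sum>(x,y)\<leftarrow>\<Delta> r2. \<epsilon> x * \<Psi> r1 y 1)"
    apply (rule sl_cong2, rule sl_cong2)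
    subgoal for r1 r2 x y by (rule antiL_f[of "\<lambda>z. \<Psi> r1 y z"]) (auto intro!: c1)
    done
  also have "\<dots> = (\<Sum>(r1,r2)\<leftarrow>R. \<Psi> r1 r2 1)"
    apply (rule sl_cong2)
    subgoal for r1 r2 by (rule counitL_f[of "\<lambda>z. \<Psi> r1 z 1"]) (auto intro!: c2)
    done
  finally show ?thesis .
qed

end


context HA
begin

lemma D3_mult:
  assumes l1: "\<And>a b. LF (G a b)" and l2: "\<And>a d. LF (\<lambda>b. G a b d)" and l3: "\<And>b d. LF (\<lambda>a. G a b d)"
  shows "(\<Sum>(c1,c2,c3)\<leftarrow>Delta3 \<Delta> (h * k). G c1 c2 c3) =
    (\<Sum>(a1,a2,a3)\<leftarrow>Delta3 \<Delta> h. \<Sum>(b1,b2,b3)\<leftarrow>Delta3 \<Delta> k. G (a1 * b1) (a2 * b2) (a3 * b3))"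
proof -
  note c1 = LF_comp[OF l1] and c2 = LF_comp[OF l2] and c3 = LF_comp[OF l3]
  have "(\<Sum>(c1,c2,c3)\<leftarrow>Delta3 \<Delta> (h * k). G c1 c2 c3) = (\<Sum>(x,y)\<leftarrow>\<Delta> (h * k). \<Sum>(y1,y2)\<leftarrow>\<Delta> y. G x y1 y2)"
    by (rule D3_unfold)
  also have "\<dots> = (\<Sum>(xa,ya)\<leftarrow>\<Delta> h. \<Sum>(xb,yb)\<leftarrow>\<Delta> k. \<Sum>(y1,y2)\<leftarrow>\<Delta> (ya * yb). G (xa * xb) y1 y2)"
    by (rule DS_mult[of "\<lambda>x y. \<Sum>(y1,y2)\<leftarrow>\<Delta> y. G x y1 y2"]) (auto intro!: c1 c2 c3)
  also have "\<dots> = (\<Sum>(xa,ya)\<leftarrow>\<Delta> h. \<Sum>(xb,yb)\<leftarrow>\<Delta> k. \<Sum>(a2,a3)\<leftarrow>\<Delta> ya. \<Sum>(b2,b3)\<leftarrow>\<Delta> yb. G (xa * xb) (a2 * b2) (a3 * b3))"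
    apply (rule sl_cong2, rule sl_cong2)
    subgoal for xa ya xb yb by (rule DS_mult[of "\<lambda>y1 y2. G (xa * xb) y1 y2"]) (auto intro!: c1 c2 c3)
    done
  also have "\<dots> = (\<Sum>(xa,ya)\<leftarrow>\<Delta> h. \<Sum>(a2,a3)\<leftarrow>\<Delta> ya. \<Sum>(xb,yb)\<leftarrow>\<Delta> k. \<Sum>(b2,b3)\<leftarrow>\<Delta> yb. G (xa * xb) (a2 * b2) (a3 * b3))"
    by (rule sl_cong2, rule swap_pp)
  also have "\<dots> = (\<Sum>(a1,a2,a3)\<leftarrow>Delta3 \<Delta> h. \<Sum>(b1,b2,b3)\<leftarrow>Delta3 \<Delta> k. G (a1 * b1) (a2 * b2) (a3 * b3))"
    by (simp add: D3_unfold)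
  finally show ?thesis .
qed

end

context SQ
begin

lemma N2: "teq2 scale (nuR (h * k)) (tmul2 (nuR h) (nuR k))"
  unfolding teq2_def
proof (intro allI impI)
  fix f g assume f: "LF f" and g: "LF g"
  note fc = LF_comp[OF f] and gc = LF_comp[OF g]
  obtain ys where ys: "\<forall>(a, z) \<in> set ys. z \<in> centre" "teq2 scale (nuR h) ys" using ax5_t by blast
  define G where "G X Z = (\<Sum>(p1,p2)\<leftarrow>R. \<Sum>(s1,s2)\<leftarrow>R. \<Sum>(b1,b2,b3)\<leftarrow>Delta3 \<Delta> k.
      f (X * (p2 * (b2 * s2))) * g (S b1 * (Z * (S p1 * (b3 * s1)))))" for X Z
  define G' where "G' X Z = (\<Sum>(p1,p2)\<leftarrow>R. \<Sum>(s1,s2)\<leftarrow>R. \<Sum>(b1,b2,b3)\<leftarrow>Delta3 \<Delta> k.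
      f (X * (p2 * (b2 * s2))) * g (Z * (S b1 * (S p1 * (b3 * s1)))))" for X Z
  have lG: "\<And>X. LF (G X)" "\<And>Z. LF (\<lambda>X. G X Z)" unfolding G_def by (auto intro!: fc gc)
  have lG': "\<And>X. LF (G' X)" "\<And>Z. LF (\<lambda>X. G' X Z)" unfolding G'_def by (auto intro!: fc gc)
  have "(\<Sum>(X,Z)\<leftarrow>nuR (h * k). f X * g Z) = (\<Sum>(r1,r2)\<leftarrow>R. \<Sum>(s1,s2)\<leftarrow>R. \<Sum>(c1,c2,c3)\<leftarrow>Delta3 \<Delta> (h * k).
       f (r2 * c2 * s2) * g (S c1 * S r1 * c3 * s1))"
    by (rule nu_sum)
  also have "\<dots> = (\<Sum>(r1,r2)\<leftarrow>R. \<Sum>(s1,s2)\<leftarrow>R. \<Sum>(a1,a2,a3)\<leftarrow>Delta3 \<Delta> h. \<Sum>(b1,b2,b3)\<leftarrow>Delta3 \<Delta> k.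
       f (r2 * (a2 * b2) * s2) * g (S (a1 * b1) * S r1 * (a3 * b3) * s1))"
    apply (rule sl_cong2, rule sl_cong2)
    subgoal for r1 r2 s1 s2
      by (rule D3_mult[of "\<lambda>c1 c2 c3. f (r2 * c2 * s2) * g (S c1 * S r1 * c3 * s1)"]) (auto intro!: fc gc)
    done
  also have "\<dots> = (\<Sum>(r1,r2)\<leftarrow>R. \<Sum>(s1,s2)\<leftarrow>R. \<Sum>(a1,a2,a3)\<leftarrow>Delta3 \<Delta> h. \<Sum>(b1,b2,b3)\<leftarrow>Delta3 \<Delta> k.
       f (r2 * (a2 * (1 * (b2 * s2)))) * g (S b1 * (S a1 * (S r1 * (a3 * (1 * (b3 * s1)))))))"
    by (simp add: S_mult mult.assoc)
  also have "\<dots> = (\<Sum>(r1,r2)\<leftarrow>R. \<Sum>(q1,q2)\<leftarrow>R. \<Sum>(p1,p2)\<leftarrow>R. \<Sum>(s1,s2)\<leftarrow>R. \<Sum>(a1,a2,a3)\<leftarrow>Delta3 \<Delta> h. \<Sum>(b1,b2,b3)\<leftarrow>Delta3 \<Delta> k.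
       f (r2 * (a2 * ((q2 * p2) * (b2 * s2)))) * g (S b1 * (S a1 * (S r1 * (a3 * ((q1 * S p1) * (b3 * s1)))))))"
    apply (rule sl_cong2)
    subgoal for r1 r2
      by (subst R7[of "\<lambda>A B. \<Sum>(s1,s2)\<leftarrow>R. \<Sum>(a1,a2,a3)\<leftarrow>Delta3 \<Delta> h. \<Sum>(b1,b2,b3)\<leftarrow>Delta3 \<Delta> k.
       f (r2 * (a2 * (B * (b2 * s2)))) * g (S b1 * (S a1 * (S r1 * (a3 * (A * (b3 * s1))))))"]) (auto intro!: fc gc)
    done
  also have "\<dots> = (\<Sum>(r1,r2)\<leftarrow>R. \<Sum>(q1,q2)\<leftarrow>R. \<Sum>(a1,a2,a3)\<leftarrow>Delta3 \<Delta> h. \<Sum>(p1,p2)\<leftarrow>R. \<Sum>(s1,s2)\<leftarrow>R. \<Sum>(b1,b2,b3)\<leftarrow>Delta3 \<Delta> k.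
       f (r2 * (a2 * ((q2 * p2) * (b2 * s2)))) * g (S b1 * (S a1 * (S r1 * (a3 * ((q1 * S p1) * (b3 * s1)))))))"
    apply (rule sl_cong2, rule sl_cong2)
    subgoal by (simp only: swap_pt[where ys = "Delta3 \<Delta> h"])
    done
  also have "\<dots> = (\<Sum>(X,Z)\<leftarrow>nuR h. G X Z)"
    unfolding G_def by (simp add: nu_sum mult.assoc)
  also have "\<dots> = (\<Sum>(X,Z)\<leftarrow>ys. G X Z)" by (rule K2[OF ys(2) lG])
  also have "\<dots> = (\<Sum>(X,Z)\<leftarrow>ys. G' X Z)"
  proof (rule arg_cong[where f=sum_list], rule map_cong, rule refl, clarify)
    fix X Z assume "(X, Z) \<in> set ys"
    hence "Z \<in> centre" using ys(1) by auto
    hence cz: "\<And>x. Z * x = x * Z" unfolding centre_def by auto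
    have "\<And>a w. a * (Z * w) = Z * (a * w)" by (metis cz mult.assoc)
    thus "G X Z = G' X Z" unfolding G_def G'_def by simp
  qed
  also have "\<dots> = (\<Sum>(X,Z)\<leftarrow>nuR h. G' X Z)" by (rule K2[OF ys(2) lG', symmetric])
  also have "\<dots> = (\<Sum>(X1,Z1)\<leftarrow>nuR h. \<Sum>(X2,Z2)\<leftarrow>nuR k. f (X1 * X2) * g (Z1 * Z2))"
    unfolding G'_def by (simp add: nu_sum mult.assoc)
  also have "\<dots> = (\<Sum>(a, b)\<leftarrow>tmul2 (nuR h) (nuR k). f a * g b)"
    unfolding tmul2_def by (simp add: sum_list_concat_map o_def case_prod_unfold)
  finally show "(\<Sum>(a, b)\<leftarrow>nuR (h * k). f a * g b) = (\<Sum>(a, b)\<leftarrow>tmul2 (nuR h) (nuR k). f a * g b)" .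
qed

lemma N2_sum:
  assumes "\<And>a. LF (\<Psi> a)" "\<And>b. LF (\<lambda>a. \<Psi> a b)"
  shows "(\<Sum>(X,Z)\<leftarrow>nuR (h * k). \<Psi> X Z) = (\<Sum>(X1,Z1)\<leftarrow>nuR h. \<Sum>(X2,Z2)\<leftarrow>nuR k. \<Psi> (X1 * X2) (Z1 * Z2))"
  using K2[OF N2 assms] unfolding tmul2_def by (simp add: sum_list_concat_map o_def case_prod_unfold)

end


context HA
begin
lemma S_zero: "S 0 = 0" by (metis S_add add_cancel_right_right)
lemma S_sum_list: "S (\<Sum>(a,b)\<leftarrow>xs. F a b) = (\<Sum>(a,b)\<leftarrow>xs. S (F a b))"
  by (induction xs) (auto simp: S_zero S_add)
end

context SQ
begin

lemma nu_sum_lin: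
  assumes l1: "\<And>a. LF (\<Psi> a)" and l2: "\<And>b. LF (\<lambda>a. \<Psi> a b)"
  shows "(\<Sum>(X,Z)\<leftarrow>nuR (\<Sum>(a,b)\<leftarrow>xs. F a b). \<Psi> X Z) = (\<Sum>(a,b)\<leftarrow>xs. \<Sum>(X,Z)\<leftarrow>nuR (F a b). \<Psi> X Z)"
proof -
  have L: "LF (\<lambda>h. \<Sum>(X,Z)\<leftarrow>nuR h. \<Psi> X Z)" using LF_nu[OF l1 l2 linH_id] .
  show ?thesis by (rule lf_sum_list2[OF L])
qed

lemma PR_S:
  assumes l1: "\<And>a b. LF (\<Psi> a b)" and l2: "\<And>a d. LF (\<lambda>b. \<Psi> a b d)" and l3: "\<And>b d. LF (\<lambda>a. \<Psi> a b d)"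
  shows "(\<Sum>(r1,r2)\<leftarrow>R. \<Sum>(X,Z)\<leftarrow>nuR (S r2). \<Psi> r1 X Z) = (\<Sum>(r1,r2)\<leftarrow>R. \<Psi> r1 (S r2) 1)"
proof -
  note c1 = LF_comp[OF l1] and c2 = LF_comp[OF l2] and c3 = LF_comp[OF l3]
  have "(\<Sum>(r1,r2)\<leftarrow>R. \<Sum>(X,Z)\<leftarrow>nuR (S r2). \<Psi> r1 X Z) = (\<Sum>(r1,r2)\<leftarrow>R. \<Sum>(X,Z)\<leftarrow>nuR (S r2). \<Psi> (T (S r1)) X Z)"
    by simp
  also have "\<dots> = (\<Sum>(r1,r2)\<leftarrow>R. \<Sum>(X,Z)\<leftarrow>nuR r2. \<Psi> (T r1) X Z)"
    by (rule R6[of "\<lambda>a b. \<Sum>(X,Z)\<leftarrow>nuR b. \<Psi> (T a) X Z"]) (auto intro!: c1 c2 c3)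
  also have "\<dots> = (\<Sum>(r1,r2)\<leftarrow>R. \<Psi> (T r1) r2 1)"
    by (rule PR[of "\<lambda>a X Z. \<Psi> (T a) X Z"]) (auto intro!: c1 c2 c3)
  also have "\<dots> = (\<Sum>(r1,r2)\<leftarrow>R. \<Psi> (T (S r1)) (S r2) 1)"
    by (rule R6[of "\<lambda>a b. \<Psi> (T a) b 1", symmetric]) (auto intro!: c1 c2 c3)
  finally show ?thesis by simp
qed

lemma Su_eq: "S (drinfeld S R) = (\<Sum>(r1,r2)\<leftarrow>R. r1 * S r2)"
proof -
  have "S (drinfeld S R) = (\<Sum>(r1,r2)\<leftarrow>R. S r1 * S (S r2))"
    unfolding drinfeld_def by (simp add: S_sum_list S_mult)
  also have "\<dots> = (\<Sum>(r1,r2)\<leftarrow>R. r1 * S r2)"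
  proof (rule separation)
    fix f assume f: "LF f"
    show "f (\<Sum>(r1,r2)\<leftarrow>R. S r1 * S (S r2)) = f (\<Sum>(r1,r2)\<leftarrow>R. r1 * S r2)"
      unfolding lf_sum_list2[OF f] by (rule R6[of "\<lambda>a b. f (a * S b)"]) (auto intro!: LF_comp[OF f])
  qed
  finally show ?thesis .
qed

lemma partA: "teq2 scale (nuR (drinfeld S R)) [(drinfeld S R, 1)]"
  unfolding teq2_def
proof (intro allI impI)
  fix f g assume f: "LF f" and g: "LF g"
  note fc = LF_comp[OF f] and gc = LF_comp[OF g]
  have "(\<Sum>(X,Z)\<leftarrow>nuR (drinfeld S R). f X * g Z) = (\<Sum>(r1,r2)\<leftarrow>R. \<Sum>(X,Z)\<leftarrow>nuR (S r2 * r1). f X * g Z)"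
    unfolding drinfeld_def by (rule nu_sum_lin) (auto intro!: fc gc)
  also have "\<dots> = (\<Sum>(r1,r2)\<leftarrow>R. \<Sum>(X1,Z1)\<leftarrow>nuR (S r2). \<Sum>(X2,Z2)\<leftarrow>nuR r1. f (X1 * X2) * g (Z1 * Z2))"
    by (rule sl_cong2, rule N2_sum) (auto intro!: fc gc)
  also have "\<dots> = (\<Sum>(r1,r2)\<leftarrow>R. \<Sum>(X2,Z2)\<leftarrow>nuR r1. \<Sum>(X1,Z1)\<leftarrow>nuR (S r2). f (X1 * X2) * g (Z1 * Z2))"
    by (rule sl_cong2, rule swap_pp)
  also have "\<dots> = (\<Sum>(r1,r2)\<leftarrow>R. \<Sum>(X1,Z1)\<leftarrow>nuR (S r2). f (X1 * r1) * g (Z1 * 1))"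
    by (rule PL[of "\<lambda>X Z c. \<Sum>(X1,Z1)\<leftarrow>nuR (S c). f (X1 * X) * g (Z1 * Z)"]) (auto intro!: fc gc)
  also have "\<dots> = (\<Sum>(r1,r2)\<leftarrow>R. f (S r2 * r1) * g (1 * 1))"
    by (rule PR_S[of "\<lambda>a X Z. f (X * a) * g (Z * 1)"]) (auto intro!: fc gc)
  also have "\<dots> = f (drinfeld S R) * g 1"
    unfolding drinfeld_def lf_sum_list2[OF f] by (simp add: sum_list_mult_const case_prod_unfold)
  finally show "(\<Sum>(a, b)\<leftarrow>nuR (drinfeld S R). f a * g b) = (\<Sum>(a, b)\<leftarrow>[(drinfeld S R, 1)]. f a * g b)" by simp
qed

lemma partB: "teq2 scale (nuR (S (drinfeld S R))) [(S (drinfeld S R), 1)]"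
  unfolding teq2_def Su_eq
proof (intro allI impI)
  fix f g assume f: "LF f" and g: "LF g"
  note fc = LF_comp[OF f] and gc = LF_comp[OF g]
  have "(\<Sum>(X,Z)\<leftarrow>nuR (\<Sum>(r1,r2)\<leftarrow>R. r1 * S r2). f X * g Z) = (\<Sum>(r1,r2)\<leftarrow>R. \<Sum>(X,Z)\<leftarrow>nuR (r1 * S r2). f X * g Z)"
    by (rule nu_sum_lin) (auto intro!: fc gc)
  also have "\<dots> = (\<Sum>(r1,r2)\<leftarrow>R. \<Sum>(X1,Z1)\<leftarrow>nuR r1. \<Sum>(X2,Z2)\<leftarrow>nuR (S r2). f (X1 * X2) * g (Z1 * Z2))"
    by (rule sl_cong2, rule N2_sum) (auto intro!: fc gc)
  also have "\<dots> = (\<Sum>(r1,r2)\<leftarrow>R. \<Sum>(X2,Z2)\<leftarrow>nuR (S r2). f (r1 * X2) * g (1 * Z2))"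
    by (rule PL[of "\<lambda>X Z c. \<Sum>(X2,Z2)\<leftarrow>nuR (S c). f (X * X2) * g (Z * Z2)"]) (auto intro!: fc gc)
  also have "\<dots> = (\<Sum>(r1,r2)\<leftarrow>R. f (r1 * S r2) * g (1 * 1))"
    by (rule PR_S[of "\<lambda>a X Z. f (a * X) * g (1 * Z)"]) (auto intro!: fc gc)
  also have "\<dots> = f (\<Sum>(r1,r2)\<leftarrow>R. r1 * S r2) * g 1"
    unfolding lf_sum_list2[OF f] by (simp add: sum_list_mult_const case_prod_unfold)
  finally show "(\<Sum>(a, b)\<leftarrow>nuR (\<Sum>(r1,r2)\<leftarrow>R. r1 * S r2). f a * g b) = (\<Sum>(a, b)\<leftarrow>[(\<Sum>(r1,r2)\<leftarrow>R. r1 * S r2, 1)]. f a * g b)" by simp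
qed

lemma partC: "teq2 scale (nuR (drinfeld S R * S (drinfeld S R))) [(drinfeld S R * S (drinfeld S R), 1)]"
  unfolding teq2_def
proof (intro allI impI)
  fix f g assume f: "LF f" and g: "LF g"
  note fc = LF_comp[OF f] and gc = LF_comp[OF g]
  define u where "u = drinfeld S R"
  have "(\<Sum>(X,Z)\<leftarrow>nuR (u * S u). f X * g Z) = (\<Sum>(X1,Z1)\<leftarrow>nuR u. \<Sum>(X2,Z2)\<leftarrow>nuR (S u). f (X1 * X2) * g (Z1 * Z2))"
    by (rule N2_sum) (auto intro!: fc gc)
  also have "\<dots> = (\<Sum>(X1,Z1)\<leftarrow>[(u, 1)]. \<Sum>(X2,Z2)\<leftarrow>nuR (S u). f (X1 * X2) * g (Z1 * Z2))"
    unfolding u_def by (rule K2[OF partA]) (auto intro!: fc gc)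
  also have "\<dots> = (\<Sum>(X2,Z2)\<leftarrow>[(S u, 1)]. f (u * X2) * g (1 * Z2))"
  proof -
    have "(\<Sum>(X2,Z2)\<leftarrow>nuR (S u). f (u * X2) * g (1 * Z2)) = (\<Sum>(X2,Z2)\<leftarrow>[(S u, 1)]. f (u * X2) * g (1 * Z2))"
      unfolding u_def by (rule K2[OF partB]) (auto intro!: fc gc)
    thus ?thesis by simp
  qed
  finally show "(\<Sum>(a, b)\<leftarrow>nuR (drinfeld S R * S (drinfeld S R)). f a * g b) =
    (\<Sum>(a, b)\<leftarrow>[(drinfeld S R * S (drinfeld S R), 1)]. f a * g b)" unfolding u_def by simp
qed

end

theorem proposition3p4:
  fixes scale :: "'k::field \<Rightarrow> 'h::ring_1 \<Rightarrow> 'h"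
    and \<Delta> :: "'h \<Rightarrow> ('h \<times> 'h) list" and \<epsilon> :: "'h \<Rightarrow> 'k" and S :: "'h \<Rightarrow> 'h"
    and R :: "('h \<times> 'h) list"
  assumes "semiquasitriangular scale \<Delta> \<epsilon> S R"
  defines "u \<equiv> drinfeld S R"
  shows "teq2 scale (nu \<Delta> S R u) [(u, 1)] \<and>
         teq2 scale (nu \<Delta> S R (S u)) [(S u, 1)] \<and>
         teq2 scale (nu \<Delta> S R (u * S u)) [(u * S u, 1)]"
proof -
  interpret SQ scale \<Delta> \<epsilon> S R
    using assms(1) unfolding SQ_def HA_def SQ_axioms_def semiquasitriangular_def by auto
  show ?thesis unfolding u_def using partA partB partC by simp
qed


end
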